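(* Consider the multiple regression model $\mathbf{y}_n=\mathbf{X}_n\boldsymbol\beta+\boldsymbol\varepsilon_n$, where $\{x_{ij}\}$ ($i=1,2,\ldots$; $j=1,\ldots,p$) is an arbitrary double array of random variables, $\mathbf{X}_n=(x_{ij})_{1\leqslant i\leqslant n,1\leqslant j\leqslant p}$, $\boldsymbol\beta\in\mathbb{R}^p$, $\boldsymbol\varepsilon_n=(\varepsilon_1,\ldots,\varepsilon_n)'$, and $\boldsymbol{\widehat\beta}_n=\boldsymbol\beta+(\mathbf{X}_n'\mathbf{X}_n)^{-1}\mathbf{X}_n'\boldsymbol\varepsilon_n$ (defined when $\mathbf{X}_n'\mathbf{X}_n$ is non-singular). Suppose $\{\varepsilon_n,n\geqslant1\}$ is a sequence of pairwise PQD random variables stochastically dominated by a random variable $\varepsilon$ with $\mathbb{E}\varepsilon^2<\infty$ and \[ \sum_{1\leqslant k<j<\infty}\int_j^\infty t^{-2}\left[G_{\varepsilon_k^+,\varepsilon_j^+}(\sqrt t)+G_{\varepsilon_k^-,\varepsilon_j^-}(\sqrt t)\right]\mathrm{d}t<\infty . \] If $\mathbf{X}_n'\mathbf{X}_n$ is non-singular a.s. for some $n\geqslant p$ and $\rho\big((\mathbf{X}_n'\mathbf{X}_n)^{-1}\big)=o(n^{-1})$ a.s., then $\boldsymbol{\widehat\beta}_n\to\boldsymbol\beta$ almost surely.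
   Context: $\rho(\mathbf{A})$ denotes the spectral radius $\sup\{|\lambda|:\lambda\text{ eigenvalue of }\mathbf{A}\}$. $Z^+=\max(Z,0)$, $Z^-=\max(-Z,0)$. A sequence $\{\varepsilon_n\}$ is pairwise PQD if $\mathbb{P}\{\varepsilon_k\leqslant x,\varepsilon_j\leqslant y\}-\mathbb{P}\{\varepsilon_k\leqslant x\}\mathbb{P}\{\varepsilon_j\leqslant y\}\geqslant0$ for all reals $x,y$ and all $k\neq j$. $\{\varepsilon_n\}$ is stochastically dominated by $\varepsilon$ if there is $C>0$ with $\sup_n\mathbb{P}\{|\varepsilon_n|>t\}\leqslant C\,\mathbb{P}\{|\varepsilon|>t\}$ for all $t>0$. For random variables $X,Y$ and $t>0$, $g_t(s)=\max(\min(s,t),-t)$, $\Delta_{X,Y}(x,y)=\mathbb{P}\{X\leqslant x,Y\leqslant y\}-\mathbb{P}\{X\leqslant x\}\mathbb{P}\{Y\leqslant y\}$, and $G_{X,Y}(t)=\mathrm{Cov}(g_t(X),g_t(Y))=\int_{-t}^t\int_{-t}^t\Delta_{X,Y}(x,y)\,\mathrm{d}x\,\mathrm{d}y$. *)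

theory Defs
  imports "HOL-Probability.Probability"
begin

definition trunc_g :: "real \<Rightarrow> real \<Rightarrow> real" where
  "trunc_g t s = max (min s t) (- t)"

definition G_cov :: "'a measure \<Rightarrow> ('a \<Rightarrow> real) \<Rightarrow> ('a \<Rightarrow> real) \<Rightarrow> real \<Rightarrow> real" where
  "G_cov M X Y t =
     (\<integral>\<omega>. trunc_g t (X \<omega>) * trunc_g t (Y \<omega>) \<partial>M)
     - (\<integral>\<omega>. trunc_g t (X \<omega>) \<partial>M) * (\<integral>\<omega>. trunc_g t (Y \<omega>) \<partial>M)"

definition spec_radius :: "real^'n^'n \<Rightarrow> real" where
  "spec_radius A = Sup {cmod l | l. \<exists>v :: complex^'n. v \<noteq> 0 \<and>
       (\<chi> i j. complex_of_real (A $ i $ j)) *v v = l *s v}"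

definition pairwise_PQD :: "'a measure \<Rightarrow> (nat \<Rightarrow> 'a \<Rightarrow> real) \<Rightarrow> bool" where
  "pairwise_PQD M e \<longleftrightarrow> (\<forall>k j x y. 1 \<le> k \<and> 1 \<le> j \<and> k \<noteq> j \<longrightarrow>
      measure M {\<omega>\<in>space M. e k \<omega> \<le> x \<and> e j \<omega> \<le> y}
      - measure M {\<omega>\<in>space M. e k \<omega> \<le> x} * measure M {\<omega>\<in>space M. e j \<omega> \<le> y} \<ge> 0)"

definition stoch_dominated :: "'a measure \<Rightarrow> (nat \<Rightarrow> 'a \<Rightarrow> real) \<Rightarrow> ('a \<Rightarrow> real) \<Rightarrow> bool" where
  "stoch_dominated M e Z \<longleftrightarrow> (\<exists>C>0. \<forall>n\<ge>1. \<forall>t>0.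
      measure M {\<omega>\<in>space M. \<bar>e n \<omega>\<bar> > t} \<le> C * measure M {\<omega>\<in>space M. \<bar>Z \<omega>\<bar> > t})"

text \<open>X_n' X_n = sum_{i=1}^n x_i x_i' where x_i is the i-th row of X_n.\<close>
definition XtX :: "(nat \<Rightarrow> 'a \<Rightarrow> real^'p) \<Rightarrow> nat \<Rightarrow> 'a \<Rightarrow> real^'p^'p" where
  "XtX x n \<omega> = (\<Sum>i\<in>{1..n}. (\<chi> a b. x i \<omega> $ a * x i \<omega> $ b))"

definition Xteps :: "(nat \<Rightarrow> 'a \<Rightarrow> real^'p) \<Rightarrow> (nat \<Rightarrow> 'a \<Rightarrow> real) \<Rightarrow> nat \<Rightarrow> 'a \<Rightarrow> real^'p" where
  "Xteps x e n \<omega> = (\<Sum>i\<in>{1..n}. e i \<omega> *\<^sub>R x i \<omega>)"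

definition beta_hat :: "real^'p \<Rightarrow> (nat \<Rightarrow> 'a \<Rightarrow> real^'p) \<Rightarrow> (nat \<Rightarrow> 'a \<Rightarrow> real) \<Rightarrow> nat \<Rightarrow> 'a \<Rightarrow> real^'p" where
  "beta_hat \<beta> x e n \<omega> = \<beta> + matrix_inv (XtX x n \<omega>) *v Xteps x e n \<omega>"

end

theory Submission
  imports Defs
begin

lemma step_lower:
  fixes g :: "real \<Rightarrow> real" and R :: "real \<Rightarrow> real \<Rightarrow> bool"
  assumes mono: "\<And>a b. 0 \<le> a \<Longrightarrow> a \<le> b \<Longrightarrow> g a \<le> g b"
    and R1: "\<And>u x. u > x \<Longrightarrow> R u x" and R2: "\<And>u x. R u x \<Longrightarrow> u \<ge> x"
    and h: "h > 0" and u: "u \<ge> 0"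
  shows "g (min u (real n * h)) - g 0 \<le> (\<Sum>k<n. (g (real (Suc k) * h) - g (real k * h)) * (if R u (real k * h) then 1 else 0))"
proof -
  have "g (min u (real n * h)) - g 0 = (\<Sum>k<n. g (min u (real (Suc k) * h)) - g (min u (real k * h)))"
    using sum_lessThan_telescope[of "\<lambda>k. g (min u (real k * h))" n] u by simp
  also have "\<dots> \<le> (\<Sum>k<n. (g (real (Suc k) * h) - g (real k * h)) * (if R u (real k * h) then 1 else 0))"
  proof (rule sum_mono)
    fix k assume "k \<in> {..<n}"
    show "g (min u (real (Suc k) * h)) - g (min u (real k * h)) \<le> (g (real (Suc k) * h) - g (real k * h)) * (if R u (real k * h) then 1 else 0)"
    proof (cases "R u (real k * h)")
      case True
      then have "u \<ge> real k * h" using R2 by blast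
      then have "min u (real k * h) = real k * h" by simp
      moreover have "g (min u (real (Suc k) * h)) \<le> g (real (Suc k) * h)"
        using mono[of "min u (real (Suc k) * h)" "real (Suc k) * h"] u h by simp
      ultimately show ?thesis using True by simp
    next
      case False
      then have "u \<le> real k * h" using R1[of "real k * h" u] by (meson not_le)
      then have "min u (real k * h) = u" "min u (real (Suc k) * h) = u" using h
        by (auto simp: min_def) (smt (verit) mult_right_mono of_nat_Suc of_nat_0_le_iff)
      then show ?thesis using False by simp
    qed
  qed
  finally show ?thesis .
qed

lemma step_upper:
  fixes g :: "real \<Rightarrow> real" and R :: "real \<Rightarrow> real \<Rightarrow> bool"
  assumes mono: "\<And>a b. 0 \<le> a \<Longrightarrow> a \<le> b \<Longrightarrow> g a \<le> g b"
    and R1: "\<And>u x. u > x \<Longrightarrow> R u x" and R2: "\<And>u x. R u x \<Longrightarrow> u \<ge> x"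
    and h: "h > 0" and u: "u \<ge> 0"
  shows "(\<Sum>k<n. (g (real (Suc k) * h) - g (real k * h)) * (if R u (real k * h) then 1 else 0)) \<le> g (min (u + h) (real n * h)) - g 0"
proof -
  have "(\<Sum>k<n. (g (real (Suc k) * h) - g (real k * h)) * (if R u (real k * h) then 1 else 0))
      \<le> (\<Sum>k<n. g (min (u+h) (real (Suc k) * h)) - g (min (u+h) (real k * h)))"
  proof (rule sum_mono)
    fix k assume "k \<in> {..<n}"
    show "(g (real (Suc k) * h) - g (real k * h)) * (if R u (real k * h) then 1 else 0) \<le> g (min (u+h) (real (Suc k) * h)) - g (min (u+h) (real k * h))"
    proof (cases "R u (real k * h)")
      case True
      then have "u \<ge> real k * h" using R2 by blast
      then have "min (u+h) (real k * h) = real k * h" "min (u+h) (real (Suc k) * h) = real (Suc k) * h"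
        using h by (auto simp: min_def algebra_simps)
      then show ?thesis using True by simp
    next
      case False
      have "g (min (u+h) (real k * h)) \<le> g (min (u+h) (real (Suc k) * h))"
        using h u by (intro mono) (auto simp: min_def algebra_simps)
      then show ?thesis using False by simp
    qed
  qed
  also have "\<dots> = g (min (u + h) (real n * h)) - g 0"
    using sum_lessThan_telescope[of "\<lambda>k. g (min (u+h) (real k * h))" n] u h by simp
  finally show ?thesis .
qed


definition stepf :: "(real\<Rightarrow>real) \<Rightarrow> (real\<Rightarrow>real\<Rightarrow>bool) \<Rightarrow> real \<Rightarrow> nat \<Rightarrow> real \<Rightarrow> real" where
  "stepf g R s n u = (\<Sum>k<n. (g (real (Suc k) * (s/n)) - g (real k * (s/n))) * (if R u (real k * (s/n)) then 1 else 0))"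

definition covar :: "'a measure \<Rightarrow> ('a \<Rightarrow> real) \<Rightarrow> ('a \<Rightarrow> real) \<Rightarrow> real" where
  "covar M f g = (\<integral>\<omega>. f \<omega> * g \<omega> \<partial>M) - (\<integral>\<omega>. f \<omega> \<partial>M) * (\<integral>\<omega>. g \<omega> \<partial>M)"

lemma stepf_bounds:
  fixes g :: "real \<Rightarrow> real" and R :: "real \<Rightarrow> real \<Rightarrow> bool"
  assumes mono: "\<And>a b. 0 \<le> a \<Longrightarrow> a \<le> b \<Longrightarrow> g a \<le> g b"
    and R1: "\<And>u x. u > x \<Longrightarrow> R u x" and R2: "\<And>u x. R u x \<Longrightarrow> u \<ge> x"
    and s: "s > 0" and n: "n > 0" and u: "u \<ge> 0"
  shows "g (min u s) - g 0 \<le> stepf g R s n u" "stepf g R s n u \<le> g (min (u + s/n) s) - g 0"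
proof -
  have h: "s / n > 0" using s n by simp
  have e: "real n * (s / n) = s" using n by simp
  show "g (min u s) - g 0 \<le> stepf g R s n u"
    using step_lower[of g R "s/n" u n, OF mono R1 R2 h u] unfolding stepf_def e .
  show "stepf g R s n u \<le> g (min (u + s/n) s) - g 0"
    using step_upper[of g R "s/n" u n, OF mono R1 R2 h u] unfolding stepf_def e .
qed

lemma stepf_le:
  fixes g :: "real \<Rightarrow> real" and R :: "real \<Rightarrow> real \<Rightarrow> bool"
  assumes mono: "\<And>a b. 0 \<le> a \<Longrightarrow> a \<le> b \<Longrightarrow> g a \<le> g b"
    and R1: "\<And>u x. u > x \<Longrightarrow> R u x" and R2: "\<And>u x. R u x \<Longrightarrow> u \<ge> x"
    and s: "s > 0" and n: "n > 0" and u: "u \<ge> 0"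
  shows "0 \<le> stepf g R s n u" "stepf g R s n u \<le> g s - g 0"
proof -
  have "g (min (u + s/n) s) \<le> g s" using s n u by (intro mono) auto
  then show "stepf g R s n u \<le> g s - g 0" using stepf_bounds(2)[of g R s n u, OF mono R1 R2 s n u] by linarith
  have "g 0 \<le> g (min u s)" using s u by (intro mono) auto
  then show "0 \<le> stepf g R s n u" using stepf_bounds(1)[of g R s n u, OF mono R1 R2 s n u] by linarith
qed

lemma stepf_conv:
  fixes g :: "real \<Rightarrow> real" and R :: "real \<Rightarrow> real \<Rightarrow> bool"
  assumes mono: "\<And>a b. 0 \<le> a \<Longrightarrow> a \<le> b \<Longrightarrow> g a \<le> g b"
    and cont: "continuous_on UNIV g"
    and R1: "\<And>u x. u > x \<Longrightarrow> R u x" and R2: "\<And>u x. R u x \<Longrightarrow> u \<ge> x"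
    and s: "s > 0" and u: "u \<ge> 0"
  shows "(\<lambda>n. stepf g R s n u) \<longlonglongrightarrow> g (min u s) - g 0"
proof (rule real_tendsto_sandwich)
  show "\<forall>\<^sub>F n in sequentially. g (min u s) - g 0 \<le> stepf g R s n u"
    using eventually_gt_at_top[of 0] by eventually_elim (rule stepf_bounds(1)[of g R s _ u, OF mono R1 R2 s _ u])
  show "\<forall>\<^sub>F n in sequentially. stepf g R s n u \<le> g (min (u + s/n) s) - g 0"
    using eventually_gt_at_top[of 0] by eventually_elim (rule stepf_bounds(2)[of g R s _ u, OF mono R1 R2 s _ u])
  show "(\<lambda>n. g (min u s) - g 0) \<longlonglongrightarrow> g (min u s) - g 0" by simp
  have "(\<lambda>n. s / real n) \<longlonglongrightarrow> 0" by (rule lim_const_over_n)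
  then have "(\<lambda>n. min (u + s / real n) s) \<longlonglongrightarrow> min (u + 0) s"
    by (intro tendsto_intros)
  then have "(\<lambda>n. g (min (u + s / real n) s)) \<longlonglongrightarrow> g (min u s)"
    using cont by (simp add: continuous_on_tendsto_compose[of UNIV g])
  then show "(\<lambda>n. g (min (u + s / real n) s) - g 0) \<longlonglongrightarrow> g (min u s) - g 0"
    by (intro tendsto_intros)
qed

context prob_space
begin

lemma int_if_pred:
  assumes "Measurable.pred M P"
  shows "expectation (\<lambda>\<omega>. if P \<omega> then 1 else 0 :: real) = prob {\<omega>\<in>space M. P \<omega>}"
proof -
  have "expectation (\<lambda>\<omega>. if P \<omega> then 1 else 0 :: real) = expectation (indicator {\<omega>\<in>space M. P \<omega>})"
    by (intro Bochner_Integration.integral_cong) (auto simp: indicator_def)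
  also have "\<dots> = prob {\<omega>\<in>space M. P \<omega>}" by (simp add: Int_absorb2)
  finally show ?thesis .
qed

lemma integrable_if_pred[intro]:
  assumes "Measurable.pred M P"
  shows "integrable M (\<lambda>\<omega>. if P \<omega> then 1 else 0 :: real)"
  by (rule integrable_const_bound[where B=1]) (use assms in auto)

lemma expectation_stepf:
  assumes "\<And>x. Measurable.pred M (\<lambda>\<omega>. R (X \<omega>) x)"
  shows "expectation (\<lambda>\<omega>. stepf g R s n (X \<omega>))
     = (\<Sum>k<n. (g (real (Suc k) * (s/n)) - g (real k * (s/n))) * prob {\<omega>\<in>space M. R (X \<omega>) (real k * (s/n))})"
  unfolding stepf_def
  by (subst Bochner_Integration.integral_sum) (auto intro!: sum.cong simp: int_if_pred[OF assms] assms)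

lemma stepf_measurable[measurable]:
  assumes "\<And>x. Measurable.pred M (\<lambda>\<omega>. R (X \<omega>) x)"
  shows "(\<lambda>\<omega>. stepf g R s n (X \<omega>)) \<in> borel_measurable M"
  unfolding stepf_def using assms by measurable

lemma covar_stepf:
  assumes "\<And>x. Measurable.pred M (\<lambda>\<omega>. R (X \<omega>) x)" "\<And>x. Measurable.pred M (\<lambda>\<omega>. R (Y \<omega>) x)"
  shows "covar M (\<lambda>\<omega>. stepf g1 R s n (X \<omega>)) (\<lambda>\<omega>. stepf g2 R s n (Y \<omega>))
     = (\<Sum>k<n. \<Sum>l<n. (g1 (real (Suc k) * (s/n)) - g1 (real k * (s/n))) * (g2 (real (Suc l) * (s/n)) - g2 (real l * (s/n)))
          * (prob {\<omega>\<in>space M. R (X \<omega>) (real k * (s/n)) \<and> R (Y \<omega>) (real l * (s/n))}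
             - prob {\<omega>\<in>space M. R (X \<omega>) (real k * (s/n))} * prob {\<omega>\<in>space M. R (Y \<omega>) (real l * (s/n))}))"
proof -
  define a where "a k = g1 (real (Suc k) * (s/n)) - g1 (real k * (s/n))" for k
  define b where "b l = g2 (real (Suc l) * (s/n)) - g2 (real l * (s/n))" for l
  define P where "P k \<omega> = R (X \<omega>) (real k * (s/n))" for k \<omega>
  define Q where "Q l \<omega> = R (Y \<omega>) (real l * (s/n))" for l \<omega>
  have mP[measurable]: "Measurable.pred M (P k)" for k unfolding P_def using assms(1) by simp
  have mQ[measurable]: "Measurable.pred M (Q k)" for k unfolding Q_def using assms(2) by simp
  have prod: "stepf g1 R s n (X \<omega>) * stepf g2 R s n (Y \<omega>) = (\<Sum>k<n. \<Sum>l<n. a k * b l * (if P k \<omega> \<and> Q l \<omega> then 1 else 0))" for \<omega>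
    unfolding stepf_def a_def[symmetric] b_def[symmetric] P_def[symmetric] Q_def[symmetric] sum_product
    by (intro sum.cong refl) auto
  have E1: "expectation (\<lambda>\<omega>. stepf g1 R s n (X \<omega>) * stepf g2 R s n (Y \<omega>))
     = (\<Sum>k<n. \<Sum>l<n. a k * b l * prob {\<omega>\<in>space M. P k \<omega> \<and> Q l \<omega>})"
    unfolding prod
    by (subst Bochner_Integration.integral_sum, force)+
       (auto intro!: sum.cong simp: int_if_pred)
  have E2: "expectation (\<lambda>\<omega>. stepf g1 R s n (X \<omega>)) = (\<Sum>k<n. a k * prob {\<omega>\<in>space M. P k \<omega>})"
    using expectation_stepf[OF assms(1)] unfolding a_def P_def by simp
  have E3: "expectation (\<lambda>\<omega>. stepf g2 R s n (Y \<omega>)) = (\<Sum>l<n. b l * prob {\<omega>\<in>space M. Q l \<omega>})"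
    using expectation_stepf[OF assms(2)] unfolding b_def Q_def by simp
  show ?thesis
    unfolding covar_def E1 E2 E3 sum_product a_def[symmetric] b_def[symmetric] P_def[symmetric] Q_def[symmetric]
    by (simp add: sum_subtractf[symmetric] algebra_simps)
qed

end

context prob_space
begin

lemma covar_limit:
  fixes f g :: "'a \<Rightarrow> real" and fn gn :: "nat \<Rightarrow> 'a \<Rightarrow> real"
  assumes [measurable]: "\<And>n. fn n \<in> borel_measurable M" "\<And>n. gn n \<in> borel_measurable M"
    "f \<in> borel_measurable M" "g \<in> borel_measurable M"
  assumes bf: "\<And>n \<omega>. \<omega> \<in> space M \<Longrightarrow> \<bar>fn n \<omega>\<bar> \<le> B"
    and bg: "\<And>n \<omega>. \<omega> \<in> space M \<Longrightarrow> \<bar>gn n \<omega>\<bar> \<le> B"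
    and lf: "\<And>\<omega>. \<omega> \<in> space M \<Longrightarrow> (\<lambda>n. fn n \<omega>) \<longlonglongrightarrow> f \<omega>"
    and lg: "\<And>\<omega>. \<omega> \<in> space M \<Longrightarrow> (\<lambda>n. gn n \<omega>) \<longlonglongrightarrow> g \<omega>"
  shows "(\<lambda>n. covar M (fn n) (gn n)) \<longlonglongrightarrow> covar M f g"
proof -
  have 1: "(\<lambda>n. expectation (fn n)) \<longlonglongrightarrow> expectation f"
    by (rule integral_dominated_convergence[where w="\<lambda>_. B"]) (use bf lf in auto)
  have 2: "(\<lambda>n. expectation (gn n)) \<longlonglongrightarrow> expectation g"
    by (rule integral_dominated_convergence[where w="\<lambda>_. B"]) (use bg lg in auto)
  have 3: "(\<lambda>n. expectation (\<lambda>\<omega>. fn n \<omega> * gn n \<omega>)) \<longlonglongrightarrow> expectation (\<lambda>\<omega>. f \<omega> * g \<omega>)"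
  proof (rule integral_dominated_convergence[where w="\<lambda>_. B * B"])
    show "AE x in M. (\<lambda>i. fn i x * gn i x) \<longlonglongrightarrow> f x * g x"
      using lf lg by (auto intro!: tendsto_mult)
    fix i show "AE x in M. norm (fn i x * gn i x) \<le> B * B"
    proof (rule AE_I2)
      fix x assume x: "x \<in> space M"
      have "0 \<le> B" using bf[OF x, of i] by linarith
      then show "norm (fn i x * gn i x) \<le> B * B"
        using bf[OF x, of i] bg[OF x, of i] by (simp add: abs_mult mult_mono)
    qed
  qed auto
  show ?thesis unfolding covar_def by (intro tendsto_intros 1 2 3)
qed

lemma stepf_abs_le:
  fixes g :: "real \<Rightarrow> real" and R :: "real \<Rightarrow> real \<Rightarrow> bool"
  assumes mono: "\<And>a b. 0 \<le> a \<Longrightarrow> a \<le> b \<Longrightarrow> g a \<le> g b"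
    and R1: "\<And>u x. u > x \<Longrightarrow> R u x" and R2: "\<And>u x. R u x \<Longrightarrow> u \<ge> x"
    and s: "s > 0" and u: "u \<ge> 0"
  shows "\<bar>stepf g R s n u\<bar> \<le> g s - g 0"
proof (cases "n = 0")
  case True
  have "g 0 \<le> g s" using s by (intro mono) auto
  then show ?thesis using True by (simp add: stepf_def)
next
  case False
  then show ?thesis using stepf_le[of g R s n u, OF mono R1 R2 s _ u] by auto
qed

lemma hoeffding_bounds:
  fixes X Y :: "'a \<Rightarrow> real" and R :: "real \<Rightarrow> real \<Rightarrow> bool"
  assumes [measurable]: "X \<in> borel_measurable M" "Y \<in> borel_measurable M"
    and nX: "\<And>\<omega>. \<omega> \<in> space M \<Longrightarrow> X \<omega> \<ge> 0" and nY: "\<And>\<omega>. \<omega> \<in> space M \<Longrightarrow> Y \<omega> \<ge> 0"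
    and R1: "\<And>u x. u > x \<Longrightarrow> R u x" and R2: "\<And>u x. R u x \<Longrightarrow> u \<ge> x"
    and pX: "\<And>x. Measurable.pred M (\<lambda>\<omega>. R (X \<omega>) x)" and pY: "\<And>x. Measurable.pred M (\<lambda>\<omega>. R (Y \<omega>) x)"
    and D: "\<And>x y. 0 \<le> x \<Longrightarrow> 0 \<le> y \<Longrightarrow> prob {\<omega>\<in>space M. R (X \<omega>) x \<and> R (Y \<omega>) y} - prob {\<omega>\<in>space M. R (X \<omega>) x} * prob {\<omega>\<in>space M. R (Y \<omega>) y} \<ge> 0"
    and s: "s > 0"
  shows "covar M (\<lambda>\<omega>. min (X \<omega>) s) (\<lambda>\<omega>. min (Y \<omega>) s) \<ge> 0"
    and "covar M (\<lambda>\<omega>. (min (X \<omega>) s)\<^sup>2) (\<lambda>\<omega>. (min (Y \<omega>) s)\<^sup>2) \<le> 4 * s\<^sup>2 * covar M (\<lambda>\<omega>. min (X \<omega>) s) (\<lambda>\<omega>. min (Y \<omega>) s)"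
proof -
  define g1 :: "real \<Rightarrow> real" where "g1 = (\<lambda>x. x)"
  define g2 :: "real \<Rightarrow> real" where "g2 = (\<lambda>x. x\<^sup>2)"
  have m1: "\<And>a b. 0 \<le> a \<Longrightarrow> a \<le> b \<Longrightarrow> g1 a \<le> g1 b" unfolding g1_def by simp
  have m2: "\<And>a b. 0 \<le> a \<Longrightarrow> a \<le> b \<Longrightarrow> g2 a \<le> g2 b" unfolding g2_def by (simp add: power_mono)
  have c1: "continuous_on UNIV g1" unfolding g1_def by (intro continuous_intros)
  have c2: "continuous_on UNIV g2" unfolding g2_def by (intro continuous_intros)
  define Dl where "Dl (n::nat) k l = prob {\<omega>\<in>space M. R (X \<omega>) (real k * (s/n)) \<and> R (Y \<omega>) (real l * (s/n))}
             - prob {\<omega>\<in>space M. R (X \<omega>) (real k * (s/n))} * prob {\<omega>\<in>space M. R (Y \<omega>) (real l * (s/n))}" for n k l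
  have Dnn: "Dl n k l \<ge> 0" for n k l unfolding Dl_def using s by (intro D) auto
  define L where "L n = covar M (\<lambda>\<omega>. stepf g1 R s n (X \<omega>)) (\<lambda>\<omega>. stepf g1 R s n (Y \<omega>))" for n
  define Q where "Q n = covar M (\<lambda>\<omega>. stepf g2 R s n (X \<omega>)) (\<lambda>\<omega>. stepf g2 R s n (Y \<omega>))" for n
  have d1: "g1 (real (Suc k) * (s/n)) - g1 (real k * (s/n)) = s/n" for k n
    by (simp add: g1_def algebra_simps)
  have d2: "g2 (real (Suc k) * (s/n)) - g2 (real k * (s/n)) = (2 * real k + 1) * (s/n)^2" for k n
    by (simp add: g2_def power2_eq_square algebra_simps)
  have Lf: "L n = (\<Sum>k<n. \<Sum>l<n. (s/n) * (s/n) * Dl n k l)" for n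
    unfolding L_def covar_stepf[OF pX pY] Dl_def d1 by simp
  have Qf: "Q n = (\<Sum>k<n. \<Sum>l<n. (2 * real k + 1) * (s/n)^2 * ((2 * real l + 1) * (s/n)^2) * Dl n k l)" for n
    unfolding Q_def covar_stepf[OF pX pY] Dl_def d2 by simp
  have L0: "L n \<ge> 0" for n unfolding Lf using Dnn by (intro sum_nonneg) auto
  have QL: "Q n \<le> 4 * s\<^sup>2 * L n" if n: "n > 0" for n
  proof -
    have w: "0 \<le> (2 * real k + 1) * (s/n)^2 \<and> (2 * real k + 1) * (s/n)^2 \<le> 2 * s * (s/n)" if "k < n" for k
    proof -
      have "(2 * real k + 1) \<le> 2 * real n" using that by linarith
      then have "(2 * real k + 1) * (s/n) \<le> 2 * real n * (s/n)" using s by (intro mult_right_mono) auto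
      also have "\<dots> = 2 * s" using n by simp
      finally have "(2 * real k + 1) * (s/n) * (s/n) \<le> 2 * s * (s/n)" using s by (intro mult_right_mono) auto
      then show ?thesis using s by (simp add: power2_eq_square mult.assoc)
    qed
    have "Q n \<le> (\<Sum>k<n. \<Sum>l<n. (2 * s * (s/n)) * (2 * s * (s/n)) * Dl n k l)"
      unfolding Qf
    proof (intro sum_mono)
      fix k l assume k: "k \<in> {..<n}" and l: "l \<in> {..<n}"
      have "(2 * real k + 1) * (s/n)^2 * ((2 * real l + 1) * (s/n)^2) \<le> (2 * s * (s/n)) * (2 * s * (s/n))"
        using w[of k] w[of l] k l by (rule_tac mult_mono) auto
      then show "(2 * real k + 1) * (s/n)^2 * ((2 * real l + 1) * (s/n)^2) * Dl n k l \<le> (2 * s * (s/n)) * (2 * s * (s/n)) * Dl n k l"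
        using Dnn by (rule_tac mult_right_mono) auto
    qed
    also have "\<dots> = 4 * s\<^sup>2 * L n"
      unfolding Lf sum_distrib_left by (intro sum.cong refl) (simp add: power2_eq_square)
    finally show ?thesis .
  qed
  have limL: "L \<longlonglongrightarrow> covar M (\<lambda>\<omega>. min (X \<omega>) s) (\<lambda>\<omega>. min (Y \<omega>) s)"
    unfolding L_def
  proof (rule covar_limit[where B="g1 s - g1 0"])
    fix n \<omega> assume "\<omega> \<in> space M"
    then show "\<bar>stepf g1 R s n (X \<omega>)\<bar> \<le> g1 s - g1 0" "\<bar>stepf g1 R s n (Y \<omega>)\<bar> \<le> g1 s - g1 0"
      using stepf_abs_le[where g=g1 and R=R and s=s and u="X \<omega>" and n=n, OF m1 R1 R2 s]
        stepf_abs_le[where g=g1 and R=R and s=s and u="Y \<omega>" and n=n, OF m1 R1 R2 s] nX nY by auto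
  next
    fix \<omega> assume "\<omega> \<in> space M"
    then show "(\<lambda>n. stepf g1 R s n (X \<omega>)) \<longlonglongrightarrow> min (X \<omega>) s" "(\<lambda>n. stepf g1 R s n (Y \<omega>)) \<longlonglongrightarrow> min (Y \<omega>) s"
      using stepf_conv[where g=g1 and R=R and s=s and u="X \<omega>", OF m1 c1 R1 R2 s]
        stepf_conv[where g=g1 and R=R and s=s and u="Y \<omega>", OF m1 c1 R1 R2 s] nX nY
      by (auto simp: g1_def)
  qed (use pX pY in auto)
  have limQ: "Q \<longlonglongrightarrow> covar M (\<lambda>\<omega>. (min (X \<omega>) s)\<^sup>2) (\<lambda>\<omega>. (min (Y \<omega>) s)\<^sup>2)"
    unfolding Q_def
  proof (rule covar_limit[where B="g2 s - g2 0"])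
    fix n \<omega> assume "\<omega> \<in> space M"
    then show "\<bar>stepf g2 R s n (X \<omega>)\<bar> \<le> g2 s - g2 0" "\<bar>stepf g2 R s n (Y \<omega>)\<bar> \<le> g2 s - g2 0"
      using stepf_abs_le[where g=g2 and R=R and s=s and u="X \<omega>" and n=n, OF m2 R1 R2 s]
        stepf_abs_le[where g=g2 and R=R and s=s and u="Y \<omega>" and n=n, OF m2 R1 R2 s] nX nY by auto
  next
    fix \<omega> assume "\<omega> \<in> space M"
    then show "(\<lambda>n. stepf g2 R s n (X \<omega>)) \<longlonglongrightarrow> (min (X \<omega>) s)\<^sup>2" "(\<lambda>n. stepf g2 R s n (Y \<omega>)) \<longlonglongrightarrow> (min (Y \<omega>) s)\<^sup>2"
      using stepf_conv[where g=g2 and R=R and s=s and u="X \<omega>", OF m2 c2 R1 R2 s]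
        stepf_conv[where g=g2 and R=R and s=s and u="Y \<omega>", OF m2 c2 R1 R2 s] nX nY
      by (auto simp: g2_def)
  qed (use pX pY in auto)
  show "covar M (\<lambda>\<omega>. min (X \<omega>) s) (\<lambda>\<omega>. min (Y \<omega>) s) \<ge> 0"
    using limL L0 by (intro LIMSEQ_le_const) auto
  have "(\<lambda>n. 4 * s\<^sup>2 * L n) \<longlonglongrightarrow> 4 * s\<^sup>2 * covar M (\<lambda>\<omega>. min (X \<omega>) s) (\<lambda>\<omega>. min (Y \<omega>) s)"
    by (intro tendsto_intros limL)
  then show "covar M (\<lambda>\<omega>. (min (X \<omega>) s)\<^sup>2) (\<lambda>\<omega>. (min (Y \<omega>) s)\<^sup>2) \<le> 4 * s\<^sup>2 * covar M (\<lambda>\<omega>. min (X \<omega>) s) (\<lambda>\<omega>. min (Y \<omega>) s)"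
    using limQ QL by (intro LIMSEQ_le[OF limQ]) (auto intro!: exI[of _ 1])
qed

end

context prob_space
begin

lemma dom_moment:
  fixes W Z :: "'a \<Rightarrow> real" and p :: nat
  assumes [measurable]: "W \<in> borel_measurable M" "Z \<in> borel_measurable M"
    and nW: "\<And>\<omega>. \<omega> \<in> space M \<Longrightarrow> W \<omega> \<ge> 0"
    and C: "C \<ge> 0"
    and dom: "\<And>x. x > 0 \<Longrightarrow> prob {\<omega>\<in>space M. W \<omega> > x} \<le> C * prob {\<omega>\<in>space M. \<bar>Z \<omega>\<bar> > x}"
    and p: "p \<ge> 1" and s: "s > 0"
  shows "expectation (\<lambda>\<omega>. (min (W \<omega>) s)^p) \<le> C * expectation (\<lambda>\<omega>. (min \<bar>Z \<omega>\<bar> s)^p)"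
proof -
  define g :: "real \<Rightarrow> real" where "g = (\<lambda>x. x^p)"
  define R :: "real \<Rightarrow> real \<Rightarrow> bool" where "R = (\<lambda>u x. u > x)"
  have m: "\<And>a b. 0 \<le> a \<Longrightarrow> a \<le> b \<Longrightarrow> g a \<le> g b" unfolding g_def by (simp add: power_mono)
  have c: "continuous_on UNIV g" unfolding g_def by (intro continuous_intros)
  have R1: "\<And>u x. u > x \<Longrightarrow> R u x" and R2: "\<And>u x. R u x \<Longrightarrow> u \<ge> x" unfolding R_def by auto
  have g0: "g 0 = 0" unfolding g_def using p by simp
  have pW: "Measurable.pred M (\<lambda>\<omega>. R (W \<omega>) x)" for x unfolding R_def by measurable
  have pZ: "Measurable.pred M (\<lambda>\<omega>. R \<bar>Z \<omega>\<bar> x)" for x unfolding R_def by measurable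
  define a where "a (n::nat) k = g (real (Suc k) * (s/n)) - g (real k * (s/n))" for n k
  have a0: "a n k \<ge> 0" for n k unfolding a_def using s by (intro diff_ge_0_iff_ge[THEN iffD2] m mult_right_mono) auto
  have bound: "expectation (\<lambda>\<omega>. (min (W \<omega>) s)^p) \<le> (s/n)^p + C * expectation (\<lambda>\<omega>. stepf g R s n \<bar>Z \<omega>\<bar>)"
    if n: "n > 0" for n
  proof -
    have "expectation (\<lambda>\<omega>. (min (W \<omega>) s)^p) \<le> expectation (\<lambda>\<omega>. stepf g R s n (W \<omega>))"
    proof (rule integral_mono)
      show "integrable M (\<lambda>\<omega>. (min (W \<omega>) s)^p)"
        by (rule integrable_const_bound[where B="s^p"]) (use nW s in \<open>auto intro!: power_mono\<close>)
      show "integrable M (\<lambda>\<omega>. stepf g R s n (W \<omega>))"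
        by (rule integrable_const_bound[where B="g s - g 0"])
           (use nW s stepf_abs_le[where g=g and R=R and s=s, OF m R1 R2 s] pW in auto)
      fix \<omega> assume "\<omega> \<in> space M"
      then show "(min (W \<omega>) s)^p \<le> stepf g R s n (W \<omega>)"
        using stepf_bounds(1)[where g=g and R=R and s=s and n=n and u="W \<omega>", OF m R1 R2 s n] nW g0
        using p by (simp add: g_def zero_power)
    qed
    also have "\<dots> = (\<Sum>k<n. a n k * prob {\<omega>\<in>space M. W \<omega> > real k * (s/n)})"
      using expectation_stepf[where R=R and X=W and g=g and s=s and n=n, OF pW] unfolding a_def R_def by simp
    also have "\<dots> \<le> (\<Sum>k<n. a n k * (if k = 0 then 1 else 0) + C * (a n k * prob {\<omega>\<in>space M. \<bar>Z \<omega>\<bar> > real k * (s/n)}))"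
    proof (rule sum_mono)
      fix k assume "k \<in> {..<n}"
      show "a n k * prob {\<omega>\<in>space M. W \<omega> > real k * (s/n)} \<le> a n k * (if k = 0 then 1 else 0) + C * (a n k * prob {\<omega>\<in>space M. \<bar>Z \<omega>\<bar> > real k * (s/n)})"
      proof (cases "k = 0")
        case True
        have "a n k * prob {\<omega>\<in>space M. W \<omega> > real k * (s/n)} \<le> a n k * 1"
          using a0[of n k] by (intro mult_left_mono) auto
        moreover have "0 \<le> C * (a n k * prob {\<omega>\<in>space M. \<bar>Z \<omega>\<bar> > real k * (s/n)})"
          using a0[of n k] C by simp
        ultimately show ?thesis using True by simp
      next
        case False
        then have "real k * (s/n) > 0" using s n by simp
        then have "prob {\<omega>\<in>space M. W \<omega> > real k * (s/n)} \<le> C * prob {\<omega>\<in>space M. \<bar>Z \<omega>\<bar> > real k * (s/n)}"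
          by (rule dom)
        then have "a n k * prob {\<omega>\<in>space M. W \<omega> > real k * (s/n)} \<le> a n k * (C * prob {\<omega>\<in>space M. \<bar>Z \<omega>\<bar> > real k * (s/n)})"
          using a0[of n k] by (intro mult_left_mono) auto
        then show ?thesis using False by (simp add: algebra_simps)
      qed
    qed
    also have "\<dots> = a n 0 + C * (\<Sum>k<n. a n k * prob {\<omega>\<in>space M. \<bar>Z \<omega>\<bar> > real k * (s/n)})"
    proof -
      have "(\<Sum>k<n. a n k * (if k = 0 then 1 else 0)) = (\<Sum>k<n. if k = 0 then a n 0 else 0)"
        by (intro sum.cong) auto
      also have "\<dots> = a n 0" using n by (simp add: sum.delta)
      finally show ?thesis by (simp add: sum.distrib sum_distrib_left)
    qed
    also have "(\<Sum>k<n. a n k * prob {\<omega>\<in>space M. \<bar>Z \<omega>\<bar> > real k * (s/n)}) = expectation (\<lambda>\<omega>. stepf g R s n \<bar>Z \<omega>\<bar>)"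
      using expectation_stepf[where R=R and X="\<lambda>\<omega>. \<bar>Z \<omega>\<bar>" and g=g and s=s and n=n, OF pZ] unfolding a_def R_def by simp
    also have "a n 0 = (s/n)^p" unfolding a_def g_def using p by simp
    finally show ?thesis .
  qed
  have lim1: "(\<lambda>n. (s / real n)^p) \<longlonglongrightarrow> 0"
  proof -
    have "(\<lambda>n. (s / real n)^p) \<longlonglongrightarrow> 0^p" by (intro tendsto_intros lim_const_over_n)
    moreover have "(0::real)^p = 0" using p by (simp add: zero_power)
    ultimately show ?thesis by simp
  qed
  have lim2: "(\<lambda>n. expectation (\<lambda>\<omega>. stepf g R s n \<bar>Z \<omega>\<bar>)) \<longlonglongrightarrow> expectation (\<lambda>\<omega>. (min \<bar>Z \<omega>\<bar> s)^p)"
  proof (rule integral_dominated_convergence[where w="\<lambda>_. g s - g 0"])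
    show "AE x in M. (\<lambda>n. stepf g R s n \<bar>Z x\<bar>) \<longlonglongrightarrow> (min \<bar>Z x\<bar> s)^p"
      using stepf_conv[where g=g and R=R and s=s, OF m c R1 R2 s] g0 p by (auto simp: g_def zero_power)
    fix n show "AE x in M. norm (stepf g R s n \<bar>Z x\<bar>) \<le> g s - g 0"
      using stepf_abs_le[where g=g and R=R and s=s, OF m R1 R2 s] by auto
  qed (use pZ in auto)
  have "(\<lambda>n. (s / real n)^p + C * expectation (\<lambda>\<omega>. stepf g R s n \<bar>Z \<omega>\<bar>)) \<longlonglongrightarrow> 0 + C * expectation (\<lambda>\<omega>. (min \<bar>Z \<omega>\<bar> s)^p)"
    by (intro tendsto_intros lim1 lim2)
  then show ?thesis
    using bound by (intro LIMSEQ_le[OF tendsto_const]) (auto intro!: exI[of _ 1])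
qed

end

lemma geom1:
  fixes z :: real assumes z: "z \<ge> 0"
  shows "(\<Sum>m<M. 2^m * (if z > 2^m then 1 else 0)) \<le> min (2*z) (2^M)"
proof (induction M)
  case 0 then show ?case using z by simp
next
  case (Suc M)
  show ?case
  proof (cases "z > 2^M")
    case True
    have "(\<Sum>m<Suc M. 2^m * (if z > 2^m then 1 else 0)) \<le> 2^M + (2::real)^M"
      using Suc True by simp
    then show ?thesis using True by simp
  next
    case False
    then show ?thesis using Suc by (simp add: min_def split: if_splits)
  qed
qed

lemma geom2:
  fixes z :: real assumes z: "z \<ge> 0"
  shows "(\<Sum>m<M. (min z (2^(m+1)))\<^sup>2 / 2^m) \<le> (if 2^M \<le> z then 4 * 2^M else 8*z - 2*z\<^sup>2/2^M)"
proof (induction M)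
  case 0 then show ?case using z by (auto simp: power2_eq_square) (smt (verit) mult_left_le)
next
  case (Suc M)
  define c :: real where "c = 2^M"
  have c: "c > 0" unfolding c_def by simp
  have e1: "(2::real)^(M+1) = 2 * c" "(2::real)^(Suc M) = 2 * c" unfolding c_def by simp_all
  have S: "(\<Sum>m<Suc M. (min z (2^(m+1)))\<^sup>2 / 2^m) = (\<Sum>m<M. (min z (2^(m+1)))\<^sup>2 / 2^m) + (min z (2*c))\<^sup>2 / c"
    using e1 by (simp add: c_def)
  show ?case
  proof (cases "2 * c \<le> z")
    case True
    then have "c \<le> z" using c by simp
    then have "(\<Sum>m<M. (min z (2^(m+1)))\<^sup>2 / 2^m) \<le> 4 * c" using Suc by (simp add: c_def)
    moreover have "(min z (2*c))\<^sup>2 / c = 4 * c" using True c by (simp add: power2_eq_square)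
    ultimately show ?thesis unfolding S e1 using True by simp
  next
    case False
    then have m: "min z (2*c) = z" by simp
    show ?thesis
    proof (cases "c \<le> z")
      case True
      then have "(\<Sum>m<M. (min z (2^(m+1)))\<^sup>2 / 2^m) \<le> 4 * c" using Suc by (simp add: c_def)
      moreover have "4 * c + z\<^sup>2 / c \<le> 8*z - 2*z\<^sup>2/(2*c)"
      proof -
        have "(z - c) * (z - 2*c) \<le> 0" using True False by (intro mult_nonneg_nonpos) auto
        moreover have "(z - c) * (z - 2*c) = z*z - 3*(z*c) + 2*(c*c)" by (simp add: algebra_simps)
        moreover have "z * c \<ge> 0" using z c by simp
        ultimately have "4 * c * c + z * z \<le> 8 * z * c - z * z" by (simp add: algebra_simps)
        then have h2: "c * (4 * c * c + z * z) \<le> c * (8 * z * c - z * z)" using c by (intro mult_left_mono) auto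
        have "4 * c + z\<^sup>2 / c = (c * (4 * c * c + z * z)) / (c * c)" using c by (simp add: field_simps power2_eq_square)
        also have "\<dots> \<le> (c * (8 * z * c - z * z)) / (c * c)" using h2 c by (intro divide_right_mono) auto
        also have "\<dots> = 8*z - 2*z\<^sup>2/(2*c)" using c by (simp add: field_simps power2_eq_square)
        finally show ?thesis .
      qed
      ultimately show ?thesis unfolding S e1 m using False by simp
    next
      case False2: False
      then have "(\<Sum>m<M. (min z (2^(m+1)))\<^sup>2 / 2^m) \<le> 8*z - 2*z\<^sup>2/c" using Suc by (simp add: c_def)
      moreover have "8*z - 2*z\<^sup>2/c + z\<^sup>2 / c = 8*z - 2*z\<^sup>2/(2*c)" using c by (simp add: field_simps)
      ultimately show ?thesis unfolding S e1 m using False by simp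
    qed
  qed
qed

lemma geom2':
  fixes z :: real assumes z: "z \<ge> 0"
  shows "(\<Sum>m<M. (min z (2^(m+1)))\<^sup>2 / 2^m) \<le> 8 * z"
proof -
  have "(if 2^M \<le> z then 4 * 2^M else 8*z - 2*z\<^sup>2/2^M) \<le> 8 * z"
    using z by (auto simp: field_simps)
  then show ?thesis using geom2[OF z, of M] by linarith
qed

lemma ennreal_suminf_le_real:
  fixes f :: "nat \<Rightarrow> real"
  assumes "\<And>M. (\<Sum>m<M. f m) \<le> B" "\<And>m. f m \<ge> 0"
  shows "(\<Sum>m. ennreal (f m)) \<le> ennreal B"
  unfolding suminf_eq_SUP
proof (rule SUP_least)
  fix M show "(\<Sum>m<M. ennreal (f m)) \<le> ennreal B"
    using assms by (simp add: sum_nonneg ennreal_leI)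
qed

context prob_space
begin

lemma sum_tail_Z:
  fixes Z :: "'a \<Rightarrow> real"
  assumes [measurable]: "Z \<in> borel_measurable M" and Z2: "integrable M (\<lambda>\<omega>. (Z \<omega>)\<^sup>2)"
  shows "(\<Sum>m. ennreal (2^m * prob {\<omega>\<in>space M. (Z \<omega>)\<^sup>2 > 2^m})) \<le> ennreal (2 * expectation (\<lambda>\<omega>. (Z \<omega>)\<^sup>2))"
proof -
  have "(\<Sum>m. ennreal (2^m * prob {\<omega>\<in>space M. (Z \<omega>)\<^sup>2 > 2^m}))
      = (\<Sum>m. \<integral>\<^sup>+\<omega>. ennreal (2^m * (if (Z \<omega>)\<^sup>2 > 2^m then 1 else 0)) \<partial>M)"
  proof (intro suminf_cong)
    fix m :: nat
    have "(\<integral>\<^sup>+\<omega>. ennreal (2^m * (if (Z \<omega>)\<^sup>2 > 2^m then 1 else 0)) \<partial>M)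
        = (\<integral>\<^sup>+\<omega>. ennreal (2^m) * indicator {\<omega>\<in>space M. (Z \<omega>)\<^sup>2 > 2^m} \<omega> \<partial>M)"
      by (intro nn_integral_cong) (auto simp: indicator_def)
    also have "\<dots> = ennreal (2^m) * emeasure M {\<omega>\<in>space M. (Z \<omega>)\<^sup>2 > 2^m}"
      by (intro nn_integral_cmult_indicator) measurable
    also have "\<dots> = ennreal (2^m * prob {\<omega>\<in>space M. (Z \<omega>)\<^sup>2 > 2^m})"
      by (simp add: emeasure_eq_measure ennreal_mult)
    finally show "ennreal (2^m * prob {\<omega>\<in>space M. (Z \<omega>)\<^sup>2 > 2^m}) = (\<integral>\<^sup>+\<omega>. ennreal (2^m * (if (Z \<omega>)\<^sup>2 > 2^m then 1 else 0)) \<partial>M)" ..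
  qed
  also have "\<dots> = (\<integral>\<^sup>+\<omega>. (\<Sum>m. ennreal (2^m * (if (Z \<omega>)\<^sup>2 > 2^m then 1 else 0))) \<partial>M)"
    by (rule nn_integral_suminf[symmetric]) measurable
  also have "\<dots> \<le> (\<integral>\<^sup>+\<omega>. ennreal (2 * (Z \<omega>)\<^sup>2) \<partial>M)"
  proof (intro nn_integral_mono)
    fix \<omega>
    show "(\<Sum>m. ennreal (2^m * (if (Z \<omega>)\<^sup>2 > 2^m then 1 else 0))) \<le> ennreal (2 * (Z \<omega>)\<^sup>2)"
    proof (rule ennreal_suminf_le_real)
      fix M show "(\<Sum>m<M. 2^m * (if (Z \<omega>)\<^sup>2 > 2^m then 1 else 0)) \<le> 2 * (Z \<omega>)\<^sup>2"
        using geom1[of "(Z \<omega>)\<^sup>2" M] by simp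
    qed simp
  qed
  also have "\<dots> = ennreal (expectation (\<lambda>\<omega>. 2 * (Z \<omega>)\<^sup>2))"
    by (intro nn_integral_eq_integral) (use Z2 in auto)
  finally show ?thesis by simp
qed

lemma sum_trunc4_Z:
  fixes Z :: "'a \<Rightarrow> real"
  assumes [measurable]: "Z \<in> borel_measurable M" and Z2: "integrable M (\<lambda>\<omega>. (Z \<omega>)\<^sup>2)"
  shows "(\<Sum>m. ennreal (expectation (\<lambda>\<omega>. (min ((Z \<omega>)\<^sup>2) (2^(m+1)))\<^sup>2) / 2^m)) \<le> ennreal (8 * expectation (\<lambda>\<omega>. (Z \<omega>)\<^sup>2))"
proof -
  have int: "integrable M (\<lambda>\<omega>. (min ((Z \<omega>)\<^sup>2) (2^(m+1)))\<^sup>2 / 2^m)" for m :: nat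
  proof (rule integrable_const_bound[where B="(2^(m+1))\<^sup>2 / 2^m"])
    show "AE x in M. norm ((min ((Z x)\<^sup>2) (2^(m+1)))\<^sup>2 / 2^m) \<le> (2^(m+1))\<^sup>2 / 2^m"
    proof (rule AE_I2)
      fix x
      have "(min ((Z x)\<^sup>2) (2^(m+1)))\<^sup>2 \<le> (2^(m+1))\<^sup>2"
        by (rule power_mono) auto
      then show "norm ((min ((Z x)\<^sup>2) (2^(m+1)))\<^sup>2 / 2^m) \<le> (2^(m+1))\<^sup>2 / (2::real)^m"
        by (simp add: divide_right_mono)
    qed
  qed measurable
  have "(\<Sum>m. ennreal (expectation (\<lambda>\<omega>. (min ((Z \<omega>)\<^sup>2) (2^(m+1)))\<^sup>2) / 2^m))
      = (\<Sum>m. \<integral>\<^sup>+\<omega>. ennreal ((min ((Z \<omega>)\<^sup>2) (2^(m+1)))\<^sup>2 / 2^m) \<partial>M)"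
  proof (intro suminf_cong)
    fix m :: nat
    have "expectation (\<lambda>\<omega>. (min ((Z \<omega>)\<^sup>2) (2^(m+1)))\<^sup>2) / 2^m = expectation (\<lambda>\<omega>. (min ((Z \<omega>)\<^sup>2) (2^(m+1)))\<^sup>2 / 2^m)"
      by simp
    then show "ennreal (expectation (\<lambda>\<omega>. (min ((Z \<omega>)\<^sup>2) (2^(m+1)))\<^sup>2) / 2^m) = (\<integral>\<^sup>+\<omega>. ennreal ((min ((Z \<omega>)\<^sup>2) (2^(m+1)))\<^sup>2 / 2^m) \<partial>M)"
      using nn_integral_eq_integral[OF int[of m]] by simp
  qed
  also have "\<dots> = (\<integral>\<^sup>+\<omega>. (\<Sum>m. ennreal ((min ((Z \<omega>)\<^sup>2) (2^(m+1)))\<^sup>2 / 2^m)) \<partial>M)"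
    by (rule nn_integral_suminf[symmetric]) measurable
  also have "\<dots> \<le> (\<integral>\<^sup>+\<omega>. ennreal (8 * (Z \<omega>)\<^sup>2) \<partial>M)"
  proof (intro nn_integral_mono)
    fix \<omega>
    show "(\<Sum>m. ennreal ((min ((Z \<omega>)\<^sup>2) (2^(m+1)))\<^sup>2 / 2^m)) \<le> ennreal (8 * (Z \<omega>)\<^sup>2)"
      by (rule ennreal_suminf_le_real) (use geom2'[of "(Z \<omega>)\<^sup>2"] in auto)
  qed
  also have "\<dots> = ennreal (expectation (\<lambda>\<omega>. 8 * (Z \<omega>)\<^sup>2))"
    by (intro nn_integral_eq_integral) (use Z2 in auto)
  finally show ?thesis by simp
qed

end

lemma sym_split:
  fixes b :: "nat \<Rightarrow> nat \<Rightarrow> real"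
  assumes sym: "\<And>k j. b k j = b j k"
  shows "(\<Sum>k\<in>{1..N}. \<Sum>j\<in>{1..N}. b k j) = (\<Sum>j\<in>{1..N}. b j j) + 2 * (\<Sum>j\<in>{1..N}. \<Sum>k\<in>{1..<j}. b k j)"
proof (induction N)
  case 0 then show ?case by simp
next
  case (Suc N)
  have s1: "(\<Sum>k\<in>{1..Suc N}. f k) = (\<Sum>k\<in>{1..N}. f k) + f (Suc N)" for f :: "nat \<Rightarrow> real"
    by (simp add: sum.cl_ivl_Suc)
  have s2: "{1..<Suc N} = {1..N}" by auto
  have "(\<Sum>k\<in>{1..Suc N}. \<Sum>j\<in>{1..Suc N}. b k j)
      = (\<Sum>k\<in>{1..N}. \<Sum>j\<in>{1..N}. b k j) + (\<Sum>k\<in>{1..N}. b k (Suc N)) + (\<Sum>j\<in>{1..N}. b (Suc N) j) + b (Suc N) (Suc N)"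
    unfolding s1 by (simp add: sum.distrib)
  also have "(\<Sum>j\<in>{1..N}. b (Suc N) j) = (\<Sum>k\<in>{1..N}. b k (Suc N))" using sym by simp
  finally show ?case unfolding s1 s2 Suc by simp
qed

locale wsetup = prob_space +
  fixes W :: "nat \<Rightarrow> 'a \<Rightarrow> real" and Z :: "'a \<Rightarrow> real" and C :: real and R :: "real \<Rightarrow> real \<Rightarrow> bool"
  assumes W_meas[measurable]: "\<And>i. W i \<in> borel_measurable M"
    and Z_meas[measurable]: "Z \<in> borel_measurable M"
    and W_nn: "\<And>i \<omega>. \<omega> \<in> space M \<Longrightarrow> W i \<omega> \<ge> 0"
    and C_pos: "C > 0"
    and dom: "\<And>i x. i \<ge> 1 \<Longrightarrow> x > 0 \<Longrightarrow> prob {\<omega>\<in>space M. W i \<omega> > x} \<le> C * prob {\<omega>\<in>space M. \<bar>Z \<omega>\<bar> > x}"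
    and Z2: "integrable M (\<lambda>\<omega>. (Z \<omega>)\<^sup>2)"
    and R1: "\<And>u x. u > x \<Longrightarrow> R u x" and R2: "\<And>u x. R u x \<Longrightarrow> u \<ge> x"
    and pW: "\<And>i x. Measurable.pred M (\<lambda>\<omega>. R (W i \<omega>) x)"
    and D: "\<And>k j x y. 1 \<le> k \<Longrightarrow> 1 \<le> j \<Longrightarrow> k \<noteq> j \<Longrightarrow> 0 \<le> x \<Longrightarrow> 0 \<le> y \<Longrightarrow>
      prob {\<omega>\<in>space M. R (W k \<omega>) x \<and> R (W j \<omega>) y} - prob {\<omega>\<in>space M. R (W k \<omega>) x} * prob {\<omega>\<in>space M. R (W j \<omega>) y} \<ge> 0"
begin

definition "V = expectation (\<lambda>\<omega>. (Z \<omega>)\<^sup>2)"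

lemma G_eq:
  assumes "s \<ge> 0"
  shows "G_cov M (W k) (W j) s = covar M (\<lambda>\<omega>. min (W k \<omega>) s) (\<lambda>\<omega>. min (W j \<omega>) s)"
proof -
  have t: "trunc_g s (W i \<omega>) = min (W i \<omega>) s" if "\<omega> \<in> space M" for i \<omega>
    using W_nn[OF that, of i] assms by (simp add: trunc_g_def)
  show ?thesis unfolding G_cov_def covar_def
    by (simp add: t cong: Bochner_Integration.integral_cong)
qed

lemma G_sym: "G_cov M (W k) (W j) s = G_cov M (W j) (W k) s"
  unfolding G_cov_def by (simp add: mult.commute)

lemma G_nonneg:
  assumes "1 \<le> k" "1 \<le> j" "k \<noteq> j" "s > 0"
  shows "G_cov M (W k) (W j) s \<ge> 0"
proof -
  have "covar M (\<lambda>\<omega>. min (W k \<omega>) s) (\<lambda>\<omega>. min (W j \<omega>) s) \<ge> 0"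
    using assms by (intro hoeffding_bounds(1)[where R=R]) (use D[of k j] in \<open>auto intro: W_nn R1 R2 pW\<close>)
  then show ?thesis using G_eq[of s k j] assms by simp
qed

lemma cov_sq:
  assumes "1 \<le> k" "1 \<le> j" "k \<noteq> j" "s > 0"
  shows "covar M (\<lambda>\<omega>. (min (W k \<omega>) s)\<^sup>2) (\<lambda>\<omega>. (min (W j \<omega>) s)\<^sup>2) \<le> 4 * s\<^sup>2 * G_cov M (W k) (W j) s"
proof -
  have "covar M (\<lambda>\<omega>. (min (W k \<omega>) s)\<^sup>2) (\<lambda>\<omega>. (min (W j \<omega>) s)\<^sup>2) \<le> 4 * s\<^sup>2 * covar M (\<lambda>\<omega>. min (W k \<omega>) s) (\<lambda>\<omega>. min (W j \<omega>) s)"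
    using assms by (intro hoeffding_bounds(2)[where R=R]) (use D[of k j] in \<open>auto intro: W_nn R1 R2 pW\<close>)
  then show ?thesis using G_eq[of s k j] assms by simp
qed

lemma V_nonneg: "V \<ge> 0" unfolding V_def by simp

lemma EU2:
  assumes "i \<ge> 1" "s > 0"
  shows "expectation (\<lambda>\<omega>. (min (W i \<omega>) s)\<^sup>2) \<le> C * V"
proof -
  have "expectation (\<lambda>\<omega>. (min (W i \<omega>) s)^2) \<le> C * expectation (\<lambda>\<omega>. (min \<bar>Z \<omega>\<bar> s)^2)"
    using assms C_pos by (intro dom_moment) (auto intro: W_nn dom)
  also have "expectation (\<lambda>\<omega>. (min \<bar>Z \<omega>\<bar> s)^2) \<le> V"
    unfolding V_def
  proof (rule integral_mono)
    show "integrable M (\<lambda>\<omega>. (min \<bar>Z \<omega>\<bar> s)^2)"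
      by (rule integrable_const_bound[where B="s^2"]) (use assms in \<open>auto intro!: power_mono\<close>)
    fix \<omega> show "(min \<bar>Z \<omega>\<bar> s)^2 \<le> (Z \<omega>)\<^sup>2"
    proof -
      have "0 \<le> min \<bar>Z \<omega>\<bar> s" using assms by simp
      then have "(min \<bar>Z \<omega>\<bar> s)^2 \<le> \<bar>Z \<omega>\<bar>^2" using power_mono[of "min \<bar>Z \<omega>\<bar> s" "\<bar>Z \<omega>\<bar>" 2] by simp
      then show ?thesis by simp
    qed
  qed (rule Z2)
  finally show ?thesis using C_pos by simp
qed

lemma EU4:
  assumes "i \<ge> 1" "s > 0"
  shows "expectation (\<lambda>\<omega>. (min (W i \<omega>) s)^4) \<le> C * expectation (\<lambda>\<omega>. (min \<bar>Z \<omega>\<bar> s)^4)"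
  using assms C_pos by (intro dom_moment) (auto intro: W_nn dom)

end

context wsetup
begin

lemma bounded_int:
  fixes f :: "'a \<Rightarrow> real"
  assumes "f \<in> borel_measurable M" "\<And>\<omega>. \<omega> \<in> space M \<Longrightarrow> \<bar>f \<omega>\<bar> \<le> B"
  shows "integrable M f"
  by (rule integrable_const_bound[where B=B]) (use assms in auto)

lemma U_bound:
  assumes "t > 0" "\<omega> \<in> space M"
  shows "(min (W i \<omega>) (sqrt t))\<^sup>2 \<le> t"
proof -
  have "0 \<le> min (W i \<omega>) (sqrt t)" using W_nn[OF assms(2)] assms by simp
  then have "(min (W i \<omega>) (sqrt t))\<^sup>2 \<le> (sqrt t)\<^sup>2" by (intro power_mono) auto
  then show ?thesis using assms by simp
qed

lemma int_U[intro]: "t > 0 \<Longrightarrow> integrable M (\<lambda>\<omega>. (min (W i \<omega>) (sqrt t))\<^sup>2)"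
  by (rule bounded_int[where B=t]) (auto simp: U_bound)

lemma int_UU[intro]: "t > 0 \<Longrightarrow> integrable M (\<lambda>\<omega>. (min (W i \<omega>) (sqrt t))\<^sup>2 * (min (W j \<omega>) (sqrt t))\<^sup>2)"
  by (rule bounded_int[where B="t*t"]) (auto intro!: mult_mono simp: U_bound abs_mult)

lemma variance_sum_U:
  assumes t: "t > 0"
  shows "variance (\<lambda>\<omega>. \<Sum>i\<in>{1..N}. (min (W i \<omega>) (sqrt t))\<^sup>2)
     \<le> (\<Sum>j\<in>{1..N}. expectation (\<lambda>\<omega>. (min (W j \<omega>) (sqrt t))^4))
        + 8 * t * (\<Sum>j\<in>{1..N}. \<Sum>k\<in>{1..<j}. G_cov M (W k) (W j) (sqrt t))"
proof -
  define U where "U i \<omega> = (min (W i \<omega>) (sqrt t))\<^sup>2" for i \<omega>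
  have iU: "integrable M (U i)" for i unfolding U_def using t by auto
  have iUU: "integrable M (\<lambda>\<omega>. U i \<omega> * U j \<omega>)" for i j unfolding U_def using t by auto
  have iS: "integrable M (\<lambda>\<omega>. \<Sum>i\<in>{1..N}. U i \<omega>)" using iU by auto
  have sq: "(\<Sum>i\<in>{1..N}. U i \<omega>)\<^sup>2 = (\<Sum>k\<in>{1..N}. \<Sum>j\<in>{1..N}. U k \<omega> * U j \<omega>)" for \<omega>
    by (simp add: power2_eq_square sum_product)
  have iS2: "integrable M (\<lambda>\<omega>. (\<Sum>i\<in>{1..N}. U i \<omega>)\<^sup>2)" unfolding sq using iUU by auto
  have "variance (\<lambda>\<omega>. \<Sum>i\<in>{1..N}. U i \<omega>) = expectation (\<lambda>\<omega>. (\<Sum>i\<in>{1..N}. U i \<omega>)\<^sup>2) - (expectation (\<lambda>\<omega>. \<Sum>i\<in>{1..N}. U i \<omega>))\<^sup>2"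
    by (rule variance_eq[OF iS iS2])
  also have "expectation (\<lambda>\<omega>. (\<Sum>i\<in>{1..N}. U i \<omega>)\<^sup>2) = (\<Sum>k\<in>{1..N}. \<Sum>j\<in>{1..N}. expectation (\<lambda>\<omega>. U k \<omega> * U j \<omega>))"
    unfolding sq using iUU by (simp add: Bochner_Integration.integral_sum integrable_sum)
  also have "(expectation (\<lambda>\<omega>. \<Sum>i\<in>{1..N}. U i \<omega>))\<^sup>2 = (\<Sum>k\<in>{1..N}. \<Sum>j\<in>{1..N}. expectation (U k) * expectation (U j))"
    using iU by (simp add: Bochner_Integration.integral_sum power2_eq_square sum_product)
  also have "(\<Sum>k\<in>{1..N}. \<Sum>j\<in>{1..N}. expectation (\<lambda>\<omega>. U k \<omega> * U j \<omega>)) - (\<Sum>k\<in>{1..N}. \<Sum>j\<in>{1..N}. expectation (U k) * expectation (U j))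
      = (\<Sum>k\<in>{1..N}. \<Sum>j\<in>{1..N}. covar M (U k) (U j))"
    unfolding covar_def by (simp add: sum_subtractf)
  also have "\<dots> = (\<Sum>j\<in>{1..N}. covar M (U j) (U j)) + 2 * (\<Sum>j\<in>{1..N}. \<Sum>k\<in>{1..<j}. covar M (U k) (U j))"
    by (rule sym_split) (simp add: covar_def mult.commute)
  also have "\<dots> \<le> (\<Sum>j\<in>{1..N}. expectation (\<lambda>\<omega>. (min (W j \<omega>) (sqrt t))^4))
        + 2 * (\<Sum>j\<in>{1..N}. \<Sum>k\<in>{1..<j}. 4 * t * G_cov M (W k) (W j) (sqrt t))"
  proof (intro add_mono mult_left_mono sum_mono)
    fix j assume "j \<in> {1..N}"
    have "covar M (U j) (U j) \<le> expectation (\<lambda>\<omega>. U j \<omega> * U j \<omega>)"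
      unfolding covar_def by simp
    also have "(\<lambda>\<omega>. U j \<omega> * U j \<omega>) = (\<lambda>\<omega>. (min (W j \<omega>) (sqrt t))^4)"
      unfolding U_def by (simp add: power_add[symmetric])
    finally show "covar M (U j) (U j) \<le> expectation (\<lambda>\<omega>. (min (W j \<omega>) (sqrt t))^4)" .
  next
    fix j k assume j: "j \<in> {1..N}" and k: "k \<in> {1..<j}"
    have "covar M (U k) (U j) \<le> 4 * (sqrt t)\<^sup>2 * G_cov M (W k) (W j) (sqrt t)"
      unfolding U_def using j k t by (intro cov_sq) auto
    then show "covar M (U k) (U j) \<le> 4 * t * G_cov M (W k) (W j) (sqrt t)" using t by simp
  qed simp
  also have "\<dots> = (\<Sum>j\<in>{1..N}. expectation (\<lambda>\<omega>. (min (W j \<omega>) (sqrt t))^4))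
        + 8 * t * (\<Sum>j\<in>{1..N}. \<Sum>k\<in>{1..<j}. G_cov M (W k) (W j) (sqrt t))"
    by (simp add: sum_distrib_left mult.assoc)
  finally show ?thesis unfolding U_def .
qed

end

lemma min_sq:
  fixes z t :: real assumes t: "t \<ge> 0"
  shows "(min \<bar>z\<bar> (sqrt t))\<^sup>2 = min (z\<^sup>2) t"
proof (cases "\<bar>z\<bar> \<le> sqrt t")
  case True
  have "\<bar>z\<bar>\<^sup>2 \<le> (sqrt t)\<^sup>2" using power_mono[OF True, of 2] by simp
  then show ?thesis using True t by (simp add: min_def)
next
  case False
  have "(sqrt t)\<^sup>2 < \<bar>z\<bar>\<^sup>2" using power_strict_mono[of "sqrt t" "\<bar>z\<bar>" 2] False t by simp
  then show ?thesis using False t by (simp add: min_def)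
qed

context wsetup
begin

definition "Aset m = {\<omega>\<in>space M. (\<Sum>i\<in>{1..2^m}. (W i \<omega>)\<^sup>2) > (C * V + 1) * 2^m}"
definition "aseq m = 2^m * C * prob {\<omega>\<in>space M. (Z \<omega>)\<^sup>2 > 2^m} + C * (expectation (\<lambda>\<omega>. (min ((Z \<omega>)\<^sup>2) (2^(m+1)))\<^sup>2) / 2^m)"
definition "Fsum m t = (\<Sum>j\<in>{1..2^m}. \<Sum>k\<in>{1..<j}. G_cov M (W k) (W j) (sqrt t))"

lemma Aset_sets[measurable]: "Aset m \<in> sets M"
  unfolding Aset_def by measurable

lemma Fsum_nonneg: "t > 0 \<Longrightarrow> Fsum m t \<ge> 0"
  unfolding Fsum_def by (intro sum_nonneg G_nonneg) auto

lemma probA: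
  fixes m :: nat and t :: real
  assumes t1: "2^m \<le> t" and t2: "t \<le> 2 * 2^m"
  shows "prob (Aset m) \<le> aseq m + 16 / 2^m * Fsum m t"
proof -
  define N :: real where "N = 2^m"
  have N: "N > 0" "N \<ge> 1" unfolding N_def by simp_all
  have t: "t > 0" using t1 N unfolding N_def by linarith
  define S where "S \<omega> = (\<Sum>i\<in>{1..2^m}. (min (W i \<omega>) (sqrt t))\<^sup>2)" for \<omega>
  define B where "B = {\<omega>\<in>space M. \<exists>i\<in>{1..2^m::nat}. W i \<omega> > sqrt N}"
  define E where "E = {\<omega>\<in>space M. \<bar>S \<omega> - expectation S\<bar> \<ge> N}"
  have [measurable]: "S \<in> borel_measurable M" unfolding S_def by measurable
  have Bm[measurable]: "B \<in> sets M" unfolding B_def by measurable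
  have Em[measurable]: "E \<in> sets M" unfolding E_def by measurable
  have iU: "integrable M (\<lambda>\<omega>. (min (W i \<omega>) (sqrt t))\<^sup>2)" for i using t by auto
  have ES: "expectation S \<le> N * (C * V)"
  proof -
    have "expectation S = (\<Sum>i\<in>{1..2^m}. expectation (\<lambda>\<omega>. (min (W i \<omega>) (sqrt t))\<^sup>2))"
      unfolding S_def using iU by (simp add: Bochner_Integration.integral_sum)
    also have "\<dots> \<le> (\<Sum>i\<in>{1..2^m::nat}. C * V)"
      using t by (intro sum_mono EU2) auto
    also have "\<dots> = N * (C * V)" unfolding N_def by simp
    finally show ?thesis .
  qed
  have AsubBE: "Aset m \<subseteq> B \<union> E"
  proof
    fix \<omega> assume A: "\<omega> \<in> Aset m"
    then have sp: "\<omega> \<in> space M" unfolding Aset_def by auto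
    show "\<omega> \<in> B \<union> E"
    proof (cases "\<omega> \<in> B")
      case False
      then have le: "W i \<omega> \<le> sqrt N" if "i \<in> {1..2^m}" for i
        using sp that unfolding B_def by (auto simp: not_less)
      have "sqrt N \<le> sqrt t" using t1 unfolding N_def by simp
      then have "S \<omega> = (\<Sum>i\<in>{1..2^m}. (W i \<omega>)\<^sup>2)" unfolding S_def
        using le by (intro sum.cong refl) (smt (verit))
      then have "S \<omega> > (C * V + 1) * N" using A unfolding Aset_def N_def by simp
      then have "S \<omega> - expectation S \<ge> N" using ES by (simp add: algebra_simps)
      then show ?thesis using sp unfolding E_def by auto
    qed auto
  qed
  have "prob (Aset m) \<le> prob (B \<union> E)" using AsubBE by (intro finite_measure_mono) auto
  also have "\<dots> \<le> prob B + prob E" by (rule measure_Un_le) auto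
  finally have PA: "prob (Aset m) \<le> prob B + prob E" .
  have PB: "prob B \<le> 2^m * C * prob {\<omega>\<in>space M. (Z \<omega>)\<^sup>2 > 2^m}"
  proof -
    have "B = (\<Union>i\<in>{1..2^m}. {\<omega>\<in>space M. W i \<omega> > sqrt N})" unfolding B_def by auto
    then have "prob B \<le> (\<Sum>i\<in>{1..2^m::nat}. prob {\<omega>\<in>space M. W i \<omega> > sqrt N})"
      by (simp add: measure_UNION_le)
    also have "\<dots> \<le> (\<Sum>i\<in>{1..2^m::nat}. C * prob {\<omega>\<in>space M. \<bar>Z \<omega>\<bar> > sqrt N})"
      using N by (intro sum_mono dom) auto
    also have "{\<omega>\<in>space M. \<bar>Z \<omega>\<bar> > sqrt N} = {\<omega>\<in>space M. (Z \<omega>)\<^sup>2 > 2^m}"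
    proof -
      have "\<bar>z\<bar> > sqrt N \<longleftrightarrow> z\<^sup>2 > N" for z :: real
        using N by (metis abs_ge_zero real_sqrt_abs real_sqrt_less_iff abs_of_nonneg real_sqrt_ge_zero less_le_trans not_le real_less_lsqrt real_sqrt_le_iff)
      then show ?thesis unfolding N_def by auto
    qed
    finally show ?thesis by (simp add: N_def)
  qed
  have PE: "prob E \<le> variance S / N\<^sup>2"
    unfolding E_def
  proof (rule Chebyshev_inequality)
    show "integrable M (\<lambda>x. (S x)\<^sup>2)"
    proof (rule bounded_int[where B="(real (2^m) * t)\<^sup>2"])
      fix \<omega> assume sp: "\<omega> \<in> space M"
      have "0 \<le> S \<omega>" unfolding S_def by (simp add: sum_nonneg)
      moreover have "S \<omega> \<le> (\<Sum>i\<in>{1..2^m::nat}. t)" unfolding S_def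
        using U_bound[OF t sp] by (intro sum_mono) auto
      ultimately show "\<bar>(S \<omega>)\<^sup>2\<bar> \<le> (real (2^m) * t)\<^sup>2" by (simp add: power_mono)
    qed measurable
  qed (use N in auto)
  have VS: "variance S \<le> N * (C * expectation (\<lambda>\<omega>. (min ((Z \<omega>)\<^sup>2) (2^(m+1)))\<^sup>2)) + 8 * t * Fsum m t"
  proof -
    have "variance S \<le> (\<Sum>j\<in>{1..2^m}. expectation (\<lambda>\<omega>. (min (W j \<omega>) (sqrt t))^4)) + 8 * t * Fsum m t"
      unfolding S_def Fsum_def by (rule variance_sum_U[OF t])
    also have "(\<Sum>j\<in>{1..2^m}. expectation (\<lambda>\<omega>. (min (W j \<omega>) (sqrt t))^4))
        \<le> (\<Sum>j\<in>{1..2^m::nat}. C * expectation (\<lambda>\<omega>. (min ((Z \<omega>)\<^sup>2) (2^(m+1)))\<^sup>2))"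
    proof (rule sum_mono)
      fix j :: nat assume j: "j \<in> {1..2^m}"
      have "expectation (\<lambda>\<omega>. (min (W j \<omega>) (sqrt t))^4) \<le> C * expectation (\<lambda>\<omega>. (min \<bar>Z \<omega>\<bar> (sqrt t))^4)"
        using j t by (intro EU4) auto
      also have "expectation (\<lambda>\<omega>. (min \<bar>Z \<omega>\<bar> (sqrt t))^4) \<le> expectation (\<lambda>\<omega>. (min ((Z \<omega>)\<^sup>2) (2^(m+1)))\<^sup>2)"
      proof (rule integral_mono)
        show "integrable M (\<lambda>\<omega>. (min \<bar>Z \<omega>\<bar> (sqrt t))^4)"
          by (rule bounded_int[where B="(sqrt t)^4"]) (use t in \<open>auto intro!: power_mono\<close>)
        show "integrable M (\<lambda>\<omega>. (min ((Z \<omega>)\<^sup>2) (2^(m+1)))\<^sup>2)"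
        proof (rule bounded_int[where B="(2^(m+1))\<^sup>2"])
          fix \<omega>
          have "0 \<le> min ((Z \<omega>)\<^sup>2) (2^(m+1))" by simp
          then have "(min ((Z \<omega>)\<^sup>2) (2^(m+1)))\<^sup>2 \<le> (2^(m+1))\<^sup>2"
            using power_mono[of "min ((Z \<omega>)\<^sup>2) (2^(m+1))" "2^(m+1)" 2] by simp
          then show "\<bar>(min ((Z \<omega>)\<^sup>2) (2^(m+1)))\<^sup>2\<bar> \<le> (2^(m+1))\<^sup>2" by simp
        qed measurable
        fix \<omega>
        have e: "(min \<bar>Z \<omega>\<bar> (sqrt t))^4 = (min ((Z \<omega>)\<^sup>2) t)\<^sup>2"
        proof -
          have "(min \<bar>Z \<omega>\<bar> (sqrt t))\<^sup>2 = min ((Z \<omega>)\<^sup>2) t"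
            using t by (simp add: min_sq)
          then show ?thesis by (metis power_mult numeral_times_numeral semiring_norm(12) semiring_norm(13) num_double)
        qed
        have "min ((Z \<omega>)\<^sup>2) t \<le> min ((Z \<omega>)\<^sup>2) (2^(m+1))" using t2 by auto
        then show "(min \<bar>Z \<omega>\<bar> (sqrt t))^4 \<le> (min ((Z \<omega>)\<^sup>2) (2^(m+1)))\<^sup>2"
          unfolding e using t by (intro power_mono) auto
      qed
      finally show "expectation (\<lambda>\<omega>. (min (W j \<omega>) (sqrt t))^4) \<le> C * expectation (\<lambda>\<omega>. (min ((Z \<omega>)\<^sup>2) (2^(m+1)))\<^sup>2)"
        using C_pos by simp
    qed
    also have "\<dots> = N * (C * expectation (\<lambda>\<omega>. (min ((Z \<omega>)\<^sup>2) (2^(m+1)))\<^sup>2))" unfolding N_def by simp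
    finally show ?thesis by simp
  qed
  have F0: "Fsum m t \<ge> 0" using Fsum_nonneg[OF t] .
  have "prob E \<le> (N * (C * expectation (\<lambda>\<omega>. (min ((Z \<omega>)\<^sup>2) (2^(m+1)))\<^sup>2)) + 8 * t * Fsum m t) / N\<^sup>2"
    using PE VS N by (smt (verit) divide_right_mono zero_le_power2)
  also have "\<dots> = C * (expectation (\<lambda>\<omega>. (min ((Z \<omega>)\<^sup>2) (2^(m+1)))\<^sup>2) / N) + 8 * t / N\<^sup>2 * Fsum m t"
    using N by (simp add: field_simps power2_eq_square)
  also have "8 * t / N\<^sup>2 \<le> 16 / N"
    using t2 N unfolding N_def[symmetric] by (simp add: field_simps power2_eq_square)
  then have "8 * t / N\<^sup>2 * Fsum m t \<le> 16 / N * Fsum m t" using F0 by (intro mult_right_mono)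
  finally have "prob E \<le> C * (expectation (\<lambda>\<omega>. (min ((Z \<omega>)\<^sup>2) (2^(m+1)))\<^sup>2) / N) + 16 / N * Fsum m t"
    by simp
  then show ?thesis using PA PB unfolding aseq_def N_def by simp
qed

end

lemma ennreal_suminf_swap:
  fixes f :: "nat \<Rightarrow> nat \<Rightarrow> ennreal"
  shows "(\<Sum>m. \<Sum>j. f m j) = (\<Sum>j. \<Sum>m. f m j)"
proof -
  have "(\<Sum>m. \<Sum>j. f m j) = (\<Sum>m. \<integral>\<^sup>+j. f m j \<partial>count_space UNIV)"
    by (simp add: nn_integral_count_space_nat)
  also have "\<dots> = (\<integral>\<^sup>+j. (\<Sum>m. f m j) \<partial>count_space UNIV)"
    by (rule nn_integral_suminf[symmetric]) simp
  also have "\<dots> = (\<Sum>j. \<Sum>m. f m j)"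
    by (simp add: nn_integral_count_space_nat)
  finally show ?thesis .
qed

context wsetup
begin

lemma G_meas[measurable]: "(\<lambda>t. G_cov M (W k) (W j) (sqrt t)) \<in> borel_measurable borel"
  unfolding G_cov_def trunc_g_def by measurable

end

context wsetup
begin

definition "hk k j t = ennreal (1 / t\<^sup>2 * G_cov M (W k) (W j) (sqrt t))"
definition "Hs j t = (\<Sum>k\<in>{1..<j}. hk k j t)"
definition "Ival (m::nat) = {(2::real)^m ..< 2^(m+1)}"

lemma Hs_meas[measurable]: "Hs j \<in> borel_measurable borel"
  unfolding Hs_def hk_def by measurable

lemma avg:
  "ennreal (max 0 (prob (Aset m) - aseq m) / 64) \<le> (\<Sum>j\<in>{1..2^m}. \<integral>\<^sup>+ t. indicator (Ival m) t * Hs j t \<partial>lborel)"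
proof -
  define N :: real where "N = 2^m"
  have N: "N > 0" unfolding N_def by simp
  define b where "b = max 0 (prob (Aset m) - aseq m)"
  have b0: "b \<ge> 0" unfolding b_def by simp
  have pt: "ennreal (b / (64 * N)) * indicator (Ival m) t \<le> indicator (Ival m) t * (\<Sum>j\<in>{1..2^m}. Hs j t)" for t
  proof (cases "t \<in> Ival m")
    case True
    then have t1: "2^m \<le> t" and t2: "t \<le> 2 * 2^m" unfolding Ival_def by auto
    have t: "t > 0" using t1 N unfolding N_def by linarith
    have F0: "Fsum m t \<ge> 0" by (rule Fsum_nonneg[OF t])
    have "prob (Aset m) - aseq m \<le> 16 / N * Fsum m t" using probA[OF t1 t2] unfolding N_def by simp
    then have bF: "b \<le> 16 / N * Fsum m t" unfolding b_def using F0 N by simp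
    have tt: "1 / (4 * N\<^sup>2) \<le> 1 / t\<^sup>2"
    proof -
      have "t\<^sup>2 \<le> (2 * N)\<^sup>2" using t t2 unfolding N_def by (intro power_mono) auto
      then show ?thesis using t N by (simp add: field_simps power2_eq_square)
    qed
    have "b / (64 * N) \<le> (16 / N * Fsum m t) / (64 * N)" by (rule divide_right_mono[OF bF]) (use N in simp)
    also have "\<dots> = 1 / (4 * N\<^sup>2) * Fsum m t" using N by (simp add: field_simps power2_eq_square)
    also have "\<dots> \<le> 1 / t\<^sup>2 * Fsum m t" using tt F0 by (intro mult_right_mono)
    finally have le: "b / (64 * N) \<le> 1 / t\<^sup>2 * Fsum m t" .
    have "ennreal (1 / t\<^sup>2 * Fsum m t) = (\<Sum>j\<in>{1..2^m}. Hs j t)"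
    proof -
      have "1 / t\<^sup>2 * Fsum m t = (\<Sum>j\<in>{1..2^m}. \<Sum>k\<in>{1..<j}. 1 / t\<^sup>2 * G_cov M (W k) (W j) (sqrt t))"
        unfolding Fsum_def by (simp add: sum_distrib_left)
      moreover have nn: "\<And>j k. j \<in> {1..2^m} \<Longrightarrow> k \<in> {1..<j} \<Longrightarrow> 0 \<le> 1 / t\<^sup>2 * G_cov M (W k) (W j) (sqrt t)"
        using t by (intro mult_nonneg_nonneg G_nonneg) auto
      moreover have "(\<Sum>j\<in>{1..2^m}. \<Sum>k\<in>{1..<j}. ennreal (1 / t\<^sup>2 * G_cov M (W k) (W j) (sqrt t)))
          = (\<Sum>j\<in>{1..2^m}. ennreal (\<Sum>k\<in>{1..<j}. 1 / t\<^sup>2 * G_cov M (W k) (W j) (sqrt t)))"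
        using nn by (intro sum.cong refl sum_ennreal) auto
      moreover have "\<dots> = ennreal (\<Sum>j\<in>{1..2^m}. \<Sum>k\<in>{1..<j}. 1 / t\<^sup>2 * G_cov M (W k) (W j) (sqrt t))"
        using nn by (intro sum_ennreal sum_nonneg) auto
      ultimately show ?thesis unfolding Hs_def hk_def by simp
    qed
    moreover have "ennreal (b / (64 * N)) \<le> ennreal (1 / t\<^sup>2 * Fsum m t)" using le by (rule ennreal_leI)
    ultimately show ?thesis using True by simp
  qed simp
  have "ennreal (b / 64) = ennreal (b / (64 * N)) * emeasure lborel (Ival m)"
    unfolding Ival_def N_def using N b0 by (simp add: ennreal_mult[symmetric] field_simps)
  also have "\<dots> = (\<integral>\<^sup>+ t. ennreal (b / (64 * N)) * indicator (Ival m) t \<partial>lborel)"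
    by (rule nn_integral_cmult_indicator[symmetric]) (simp add: Ival_def)
  also have "\<dots> \<le> (\<integral>\<^sup>+ t. indicator (Ival m) t * (\<Sum>j\<in>{1..2^m}. Hs j t) \<partial>lborel)"
    by (intro nn_integral_mono pt)
  also have "\<dots> = (\<Sum>j\<in>{1..2^m}. \<integral>\<^sup>+ t. indicator (Ival m) t * Hs j t \<partial>lborel)"
    unfolding sum_distrib_left by (rule nn_integral_sum) (simp add: Ival_def)
  finally show ?thesis unfolding b_def .
qed

end

context wsetup
begin

lemma Ival_disj:
  assumes "m \<noteq> m'" shows "Ival m \<inter> Ival m' = {}"
proof -
  have *: "Ival m \<inter> Ival m' = {}" if "m < m'" for m m'
  proof -
    have "(2::real)^(m+1) \<le> 2^m'" using that by (intro power_increasing) auto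
    then show ?thesis unfolding Ival_def by auto
  qed
  show ?thesis using assms *[of m m'] *[of m' m] by (cases "m < m'") (auto simp: Int_commute)
qed

lemma sum_bound:
  "(\<Sum>m. \<Sum>j\<in>{1..2^m}. \<integral>\<^sup>+ t. indicator (Ival m) t * Hs j t \<partial>lborel)
     \<le> (\<Sum>j. \<integral>\<^sup>+ t. indicator {real j..} t * Hs j t \<partial>lborel)"
proof -
  define Am where "Am m j = (if 1 \<le> j \<and> j \<le> (2::nat)^m then Ival m else {})" for m j
  have Am_sets[measurable]: "Am m j \<in> sets borel" for m j unfolding Am_def Ival_def by auto
  have e1: "(\<Sum>j\<in>{1..2^m}. \<integral>\<^sup>+ t. indicator (Ival m) t * Hs j t \<partial>lborel)
        = (\<Sum>j. \<integral>\<^sup>+ t. indicator (Am m j) t * Hs j t \<partial>lborel)" for m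
  proof -
    have "(\<Sum>j. \<integral>\<^sup>+ t. indicator (Am m j) t * Hs j t \<partial>lborel) = (\<Sum>j\<in>{1..2^m}. \<integral>\<^sup>+ t. indicator (Am m j) t * Hs j t \<partial>lborel)"
      by (rule suminf_finite) (auto simp: Am_def)
    also have "\<dots> = (\<Sum>j\<in>{1..2^m}. \<integral>\<^sup>+ t. indicator (Ival m) t * Hs j t \<partial>lborel)"
      by (intro sum.cong refl) (auto simp: Am_def)
    finally show ?thesis ..
  qed
  have "(\<Sum>m. \<Sum>j\<in>{1..2^m}. \<integral>\<^sup>+ t. indicator (Ival m) t * Hs j t \<partial>lborel)
      = (\<Sum>m. \<Sum>j. \<integral>\<^sup>+ t. indicator (Am m j) t * Hs j t \<partial>lborel)"
    unfolding e1 ..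
  also have "\<dots> = (\<Sum>j. \<Sum>m. \<integral>\<^sup>+ t. indicator (Am m j) t * Hs j t \<partial>lborel)"
    by (rule ennreal_suminf_swap)
  also have "\<dots> \<le> (\<Sum>j. \<integral>\<^sup>+ t. indicator {real j..} t * Hs j t \<partial>lborel)"
  proof (intro suminf_le summableI)
    fix j
    have "(\<Sum>m. \<integral>\<^sup>+ t. indicator (Am m j) t * Hs j t \<partial>lborel) = (\<integral>\<^sup>+ t. (\<Sum>m. indicator (Am m j) t * Hs j t) \<partial>lborel)"
      by (rule nn_integral_suminf[symmetric]) measurable
    also have "\<dots> = (\<integral>\<^sup>+ t. indicator (\<Union>m. Am m j) t * Hs j t \<partial>lborel)"
    proof (intro nn_integral_cong)
      fix t
      have "disjoint_family (\<lambda>m. Am m j)"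
        unfolding disjoint_family_on_def Am_def using Ival_disj by auto
      then show "(\<Sum>m. indicator (Am m j) t * Hs j t) = indicator (\<Union>m. Am m j) t * Hs j t"
        by (simp add: suminf_indicator)
    qed
    also have "\<dots> \<le> (\<integral>\<^sup>+ t. indicator {real j..} t * Hs j t \<partial>lborel)"
    proof (intro nn_integral_mono mult_right_mono)
      fix t
      have "(\<Union>m. Am m j) \<subseteq> {real j..}"
      proof
        fix t assume "t \<in> (\<Union>m. Am m j)"
        then obtain m where "t \<in> Am m j" by auto
        then have jm: "j \<le> 2^m" and tm: "2^m \<le> t" unfolding Am_def Ival_def by (auto split: if_splits)
        from jm have "real j \<le> 2^m" by (metis of_nat_le_iff of_nat_numeral of_nat_power)
        then have "real j \<le> t" using tm by linarith
        then show "t \<in> {real j..}" by simp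
      qed
      then show "indicator (\<Union>m. Am m j) t \<le> (indicator {real j..} t :: ennreal)"
        by (auto simp: indicator_def)
    qed simp
    finally show "(\<Sum>m. \<integral>\<^sup>+ t. indicator (Am m j) t * Hs j t \<partial>lborel) \<le> (\<integral>\<^sup>+ t. indicator {real j..} t * Hs j t \<partial>lborel)" .
  qed
  finally show ?thesis .
qed

lemma aseq_nonneg: "aseq m \<ge> 0"
  unfolding aseq_def using C_pos by (intro add_nonneg_nonneg mult_nonneg_nonneg divide_nonneg_nonneg) auto

lemma summable_PA:
  assumes H: "(\<Sum>j. \<Sum>k\<in>{1..<j}. \<integral>\<^sup>+ t. indicator {real j..} t * hk k j t \<partial>lborel) < \<infinity>"
  shows "summable (\<lambda>m. prob (Aset m))"
proof (rule summable_suminf_not_top)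
  define b where "b m = max 0 (prob (Aset m) - aseq m)" for m
  have Hs_eq: "(\<Sum>k\<in>{1..<j}. \<integral>\<^sup>+ t. indicator {real j..} t * hk k j t \<partial>lborel) = (\<integral>\<^sup>+ t. indicator {real j..} t * Hs j t \<partial>lborel)" for j
    unfolding Hs_def sum_distrib_left by (rule nn_integral_sum[symmetric]) (unfold hk_def, measurable)
  have Sb: "(\<Sum>m. ennreal (b m / 64)) < \<infinity>"
  proof -
    have "(\<Sum>m. ennreal (b m / 64)) \<le> (\<Sum>m. \<Sum>j\<in>{1..2^m}. \<integral>\<^sup>+ t. indicator (Ival m) t * Hs j t \<partial>lborel)"
      unfolding b_def by (intro suminf_le summableI avg)
    also have "\<dots> \<le> (\<Sum>j. \<integral>\<^sup>+ t. indicator {real j..} t * Hs j t \<partial>lborel)" by (rule sum_bound)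
    also have "\<dots> < \<infinity>" using H unfolding Hs_eq .
    finally show ?thesis .
  qed
  have Sa: "(\<Sum>m. ennreal (aseq m)) < \<infinity>"
  proof -
    have "(\<Sum>m. ennreal (aseq m)) = (\<Sum>m. ennreal C * ennreal (2^m * prob {\<omega>\<in>space M. (Z \<omega>)\<^sup>2 > 2^m})
        + ennreal C * ennreal (expectation (\<lambda>\<omega>. (min ((Z \<omega>)\<^sup>2) (2^(m+1)))\<^sup>2) / 2^m))"
      unfolding aseq_def using C_pos
      by (intro suminf_cong) (simp add: ennreal_plus[symmetric] ennreal_mult[symmetric] mult.assoc del: ennreal_plus)
    also have "\<dots> = ennreal C * (\<Sum>m. ennreal (2^m * prob {\<omega>\<in>space M. (Z \<omega>)\<^sup>2 > 2^m}))
        + ennreal C * (\<Sum>m. ennreal (expectation (\<lambda>\<omega>. (min ((Z \<omega>)\<^sup>2) (2^(m+1)))\<^sup>2) / 2^m))"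
      by (simp add: suminf_add[symmetric])
    also have "\<dots> \<le> ennreal C * ennreal (2 * expectation (\<lambda>\<omega>. (Z \<omega>)\<^sup>2)) + ennreal C * ennreal (8 * expectation (\<lambda>\<omega>. (Z \<omega>)\<^sup>2))"
      by (intro add_mono mult_left_mono sum_tail_Z sum_trunc4_Z Z2) auto
    also have "\<dots> < \<infinity>" by (simp add: ennreal_mult_less_top)
    finally show ?thesis .
  qed
  have "(\<Sum>m. ennreal (prob (Aset m))) \<le> (\<Sum>m. ennreal (aseq m) + 64 * ennreal (b m / 64))"
  proof (intro suminf_le summableI)
    fix m
    have "prob (Aset m) \<le> aseq m + b m" unfolding b_def by simp
    then have "ennreal (prob (Aset m)) \<le> ennreal (aseq m + b m)" by (rule ennreal_leI)
    also have "\<dots> = ennreal (aseq m) + ennreal (b m)" using aseq_nonneg by (simp add: b_def ennreal_plus)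
    also have "ennreal (b m) = 64 * ennreal (b m / 64)"
    proof -
      have b0: "b m \<ge> 0" unfolding b_def by simp
      have "ennreal (b m) = ennreal (64 * (b m / 64))" by simp
      also have "\<dots> = ennreal 64 * ennreal (b m / 64)" using b0 by (intro ennreal_mult) auto
      finally show ?thesis by simp
    qed
    finally show "ennreal (prob (Aset m)) \<le> ennreal (aseq m) + 64 * ennreal (b m / 64)" .
  qed
  also have "\<dots> = (\<Sum>m. ennreal (aseq m)) + 64 * (\<Sum>m. ennreal (b m / 64))"
    by (simp add: suminf_add[symmetric])
  also have "\<dots> < \<infinity>" using Sa Sb by (simp add: ennreal_mult_less_top)
  finally show "(\<Sum>m. ennreal (prob (Aset m))) \<noteq> \<top>" by simp
qed simp

end

context wsetup
begin

lemma eventually_bounded: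
  assumes H: "(\<Sum>j. \<Sum>k\<in>{1..<j}. \<integral>\<^sup>+ t. indicator {real j..} t * hk k j t \<partial>lborel) < \<infinity>"
  shows "AE \<omega> in M. \<exists>K. eventually (\<lambda>n. (\<Sum>i\<in>{1..n}. (W i \<omega>)\<^sup>2) \<le> K * real n) sequentially"
proof -
  have "AE \<omega> in M. eventually (\<lambda>m. \<omega> \<in> space M - Aset m) sequentially"
    using summable_PA[OF H] by (intro borel_cantelli_AE1) (auto simp: emeasure_eq_measure)
  then show ?thesis
  proof (rule AE_mp, intro AE_I2 impI)
    fix \<omega> assume sp: "\<omega> \<in> space M" and ev: "eventually (\<lambda>m. \<omega> \<in> space M - Aset m) sequentially"
    define K0 where "K0 = C * V + 1"
    from ev obtain m0 where m0: "\<And>m. m \<ge> m0 \<Longrightarrow> \<omega> \<notin> Aset m" unfolding eventually_sequentially by auto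
    have bnd: "(\<Sum>i\<in>{1..2^m}. (W i \<omega>)\<^sup>2) \<le> K0 * 2^m" if "m \<ge> m0" for m
      using m0[OF that] sp unfolding Aset_def K0_def by auto
    have "eventually (\<lambda>n. (\<Sum>i\<in>{1..n}. (W i \<omega>)\<^sup>2) \<le> (2 * K0) * real n) sequentially"
      unfolding eventually_sequentially
    proof (intro exI allI impI)
      fix n :: nat assume n: "2^m0 \<le> n"
      moreover have "(1::nat) \<le> 2^m0" by simp
      ultimately have "n \<ge> 1" by linarith
      then obtain a where a1: "2^a \<le> n" and a2: "n < 2^(a+1)" using ex_power_ivl1[of 2 n] by auto
      have "2^m0 < (2::nat)^(a+1)" using n a2 by linarith
      then have "m0 < a + 1" using power_strict_increasing_iff[of "2::nat" m0 "a+1"] by simp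
      then have ma: "m0 \<le> a + 1" by simp
      have "(\<Sum>i\<in>{1..n}. (W i \<omega>)\<^sup>2) \<le> (\<Sum>i\<in>{1..2^(a+1)}. (W i \<omega>)\<^sup>2)"
        using a2 by (intro sum_mono2) auto
      also have "\<dots> \<le> K0 * 2^(a+1)" using bnd[OF ma] .
      also have "\<dots> = 2 * K0 * 2^a" by simp
      also have "\<dots> \<le> 2 * K0 * real n"
      proof -
        have "K0 \<ge> 0" unfolding K0_def using C_pos V_nonneg by simp
        moreover have "(2::real)^a \<le> real n" using a1 by (metis of_nat_le_iff of_nat_numeral of_nat_power)
        ultimately show ?thesis by (intro mult_left_mono) auto
      qed
      finally show "(\<Sum>i\<in>{1..n}. (W i \<omega>)\<^sup>2) \<le> 2 * K0 * real n" .
    qed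
    then show "\<exists>K. eventually (\<lambda>n. (\<Sum>i\<in>{1..n}. (W i \<omega>)\<^sup>2) \<le> K * real n) sequentially" by blast
  qed
qed

end

definition outer :: "real^'p \<Rightarrow> real^'p^'p" where "outer y = (\<chi> a b. y $ a * y $ b)"

lemma outer_mult_sum:
  fixes xs :: "nat \<Rightarrow> real^'p"
  shows "(\<Sum>i\<in>I. outer (xs i)) *v v = (\<Sum>i\<in>I. (xs i \<bullet> v) *\<^sub>R xs i)"
proof -
  have "((\<Sum>i\<in>I. outer (xs i)) *v v) $ a = (\<Sum>i\<in>I. (xs i \<bullet> v) *\<^sub>R xs i) $ a" for a
  proof -
    have "((\<Sum>i\<in>I. outer (xs i)) *v v) $ a = (\<Sum>b\<in>UNIV. (\<Sum>i\<in>I. xs i $ a * xs i $ b) * v $ b)"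
      by (simp add: matrix_vector_mult_def outer_def sum_component)
    also have "\<dots> = (\<Sum>i\<in>I. \<Sum>b\<in>UNIV. xs i $ a * (xs i $ b * v $ b))"
      by (simp add: sum_distrib_right mult.assoc sum.swap[of _ UNIV I])
    also have "\<dots> = (\<Sum>i\<in>I. (xs i \<bullet> v) * xs i $ a)"
      by (simp add: inner_vec_def sum_distrib_left mult.commute)
    also have "\<dots> = (\<Sum>i\<in>I. (xs i \<bullet> v) *\<^sub>R xs i) $ a"
      by (simp add: sum_component)
    finally show ?thesis .
  qed
  then show ?thesis by (simp add: vec_eq_iff)
qed

lemma quad_form:
  fixes xs :: "nat \<Rightarrow> real^'p"
  shows "w \<bullet> ((\<Sum>i\<in>I. outer (xs i)) *v v) = (\<Sum>i\<in>I. (xs i \<bullet> v) * (xs i \<bullet> w))"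
  unfolding outer_mult_sum by (simp add: inner_sum_right inner_commute)

lemma quad_sym:
  fixes xs :: "nat \<Rightarrow> real^'p"
  shows "w \<bullet> ((\<Sum>i\<in>I. outer (xs i)) *v v) = v \<bullet> ((\<Sum>i\<in>I. outer (xs i)) *v w)"
  unfolding quad_form by (simp add: mult.commute)

lemma quad_nonneg:
  fixes xs :: "nat \<Rightarrow> real^'p"
  shows "v \<bullet> ((\<Sum>i\<in>I. outer (xs i)) *v v) = (\<Sum>i\<in>I. (xs i \<bullet> v)\<^sup>2)"
  unfolding quad_form by (simp add: power2_eq_square)


lemma min_eig:
  fixes A :: "real^'p^'p"
  assumes sym: "\<And>v w. w \<bullet> (A *v v) = v \<bullet> (A *v w)"
  obtains v \<mu> where "norm v = 1" "A *v v = \<mu> *\<^sub>R v" "\<And>w. \<mu> * (norm w)\<^sup>2 \<le> w \<bullet> (A *v w)"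
proof -
  define f where "f v = v \<bullet> (A *v v)" for v
  have cf: "continuous_on (sphere 0 1) f" unfolding f_def by (intro continuous_intros)
  have ne: "sphere (0::real^'p) 1 \<noteq> {}"
    using vector_choose_size[of 1] by (auto simp: sphere_def dist_norm)
  obtain v where v: "v \<in> sphere 0 1" and vmin: "\<And>y. y \<in> sphere 0 1 \<Longrightarrow> f v \<le> f y"
    using continuous_attains_inf[OF compact_sphere ne cf] by blast
  have nv: "norm v = 1" using v by (simp add: sphere_def dist_norm)
  define \<mu> where "\<mu> = f v"
  have fscale: "f (c *\<^sub>R w) = c\<^sup>2 * f w" for c w
    unfolding f_def by (simp add: matrix_vector_mult_scaleR power2_eq_square)
  have low: "\<mu> * (norm w)\<^sup>2 \<le> f w" for w
  proof (cases "w = 0")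
    case True then show ?thesis by (simp add: f_def)
  next
    case False
    define u where "u = (1 / norm w) *\<^sub>R w"
    have "u \<in> sphere 0 1" unfolding u_def using False by (simp add: sphere_def dist_norm)
    then have "\<mu> \<le> f u" unfolding \<mu>_def by (rule vmin)
    moreover have "w = norm w *\<^sub>R u" unfolding u_def using False by simp
    then have "f w = (norm w)\<^sup>2 * f u" using fscale by metis
    ultimately show ?thesis using mult_right_mono[of \<mu> "f u" "(norm w)\<^sup>2"] by (simp add: mult.commute)
  qed
  define d where "d = A *v v - \<mu> *\<^sub>R v"
  define c where "c = f d - \<mu> * (norm d)\<^sup>2"
  have g: "0 \<le> 2 * r * (d \<bullet> d) + r\<^sup>2 * c" for r
  proof -
    have "0 \<le> f (v + r *\<^sub>R d) - \<mu> * (norm (v + r *\<^sub>R d))\<^sup>2" using low[of "v + r *\<^sub>R d"] by simp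
    also have "f (v + r *\<^sub>R d) = f v + r * (v \<bullet> (A *v d)) + r * (d \<bullet> (A *v v)) + r\<^sup>2 * f d"
      unfolding f_def by (simp add: matrix_vector_right_distrib matrix_vector_mult_scaleR inner_add_left inner_add_right power2_eq_square algebra_simps)
    also have "v \<bullet> (A *v d) = d \<bullet> (A *v v)" by (rule sym)
    also have "(norm (v + r *\<^sub>R d))\<^sup>2 = 1 + 2 * r * (v \<bullet> d) + r\<^sup>2 * (norm d)\<^sup>2"
    proof -
      have "(norm (v + r *\<^sub>R d))\<^sup>2 = (v + r *\<^sub>R d) \<bullet> (v + r *\<^sub>R d)" by (rule power2_norm_eq_inner)
      also have "\<dots> = v \<bullet> v + 2 * r * (v \<bullet> d) + r\<^sup>2 * (d \<bullet> d)"
        by (simp add: inner_add_left inner_add_right inner_commute algebra_simps power2_eq_square)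
      also have "v \<bullet> v = 1" using nv by (simp add: power2_norm_eq_inner[symmetric])
      also have "d \<bullet> d = (norm d)\<^sup>2" by (simp add: power2_norm_eq_inner)
      finally show ?thesis .
    qed
    also have "d \<bullet> (A *v v) = d \<bullet> d + \<mu> * (v \<bullet> d)"
      unfolding d_def by (simp add: inner_diff_left inner_diff_right inner_commute algebra_simps)
    finally show ?thesis unfolding c_def \<mu>_def by (simp add: algebra_simps power2_eq_square)
  qed
  have "d \<bullet> d = 0"
  proof (rule ccontr)
    assume "d \<bullet> d \<noteq> 0"
    then have q: "d \<bullet> d > 0" by (simp add: order_le_neq_trans)
    define k where "k = \<bar>c\<bar> + 1"
    have k: "k \<ge> 1" unfolding k_def by simp
    define r where "r = - (d \<bullet> d) / k"
    have "2 * r * (d \<bullet> d) + r\<^sup>2 * c \<le> 2 * r * (d \<bullet> d) + r\<^sup>2 * k"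
      unfolding k_def by (intro add_left_mono mult_left_mono) auto
    also have "\<dots> = - (d \<bullet> d)\<^sup>2 / k" unfolding r_def using k by (simp add: field_simps power2_eq_square)
    also have "\<dots> < 0" using q k by simp
    finally show False using g[of r] by simp
  qed
  then have "A *v v = \<mu> *\<^sub>R v" unfolding d_def by simp
  then show ?thesis using that nv low unfolding f_def by blast
qed


lemma matrix_inv_props:
  fixes A :: "real^'n^'n"
  assumes "invertible A"
  shows "A ** matrix_inv A = mat 1" "matrix_inv A ** A = mat 1"
proof -
  have "A ** matrix_inv A = mat 1 \<and> matrix_inv A ** A = mat 1"
    using assms unfolding invertible_def matrix_inv_def by (rule someI_ex)
  then show "A ** matrix_inv A = mat 1" "matrix_inv A ** A = mat 1" by auto
qed

lemma eig_bdd: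
  fixes B :: "real^'n^'n"
  shows "bdd_above {cmod l | l. \<exists>v :: complex^'n. v \<noteq> 0 \<and> (\<chi> i j. complex_of_real (B $ i $ j)) *v v = l *s v}"
proof (rule bdd_aboveI)
  fix x assume "x \<in> {cmod l | l. \<exists>v :: complex^'n. v \<noteq> 0 \<and> (\<chi> i j. complex_of_real (B $ i $ j)) *v v = l *s v}"
  then obtain l w where x: "x = cmod l" and w0: "w \<noteq> (0::complex^'n)" and ev: "(\<chi> i j. complex_of_real (B $ i $ j)) *v w = l *s w"
    by auto
  have "Max (range (\<lambda>j. cmod (w $ j))) \<in> range (\<lambda>j. cmod (w $ j))" by (rule Max_in) auto
  then obtain i where i: "cmod (w $ i) = Max (range (\<lambda>j. cmod (w $ j)))" by (metis imageE)
  have imax: "cmod (w $ j) \<le> cmod (w $ i)" for j unfolding i by (rule Max_ge) auto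
  have wi: "cmod (w $ i) > 0"
  proof (rule ccontr)
    assume "\<not> cmod (w $ i) > 0"
    then have "cmod (w $ i) \<le> 0" by simp
    then have "cmod (w $ j) \<le> 0" for j using imax[of j] by linarith
    then have "w $ j = 0" for j by simp
    then show False using w0 by (simp add: vec_eq_iff)
  qed
  have "l * w $ i = (\<Sum>j\<in>UNIV. complex_of_real (B $ i $ j) * w $ j)"
    using ev[THEN arg_cong[where f="\<lambda>u. u $ i"]] by (simp add: matrix_vector_mult_def)
  then have "cmod l * cmod (w $ i) \<le> (\<Sum>j\<in>UNIV. \<bar>B $ i $ j\<bar> * cmod (w $ j))"
    by (metis (no_types, lifting) norm_mult norm_of_real norm_sum sum.cong)
  also have "\<dots> \<le> (\<Sum>j\<in>UNIV. \<bar>B $ i $ j\<bar> * cmod (w $ i))"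
    using imax by (intro sum_mono mult_left_mono) auto
  also have "\<dots> = (\<Sum>j\<in>UNIV. \<bar>B $ i $ j\<bar>) * cmod (w $ i)" by (simp add: sum_distrib_right)
  finally have "cmod l \<le> (\<Sum>j\<in>UNIV. \<bar>B $ i $ j\<bar>)" using wi by simp
  also have "\<dots> \<le> (\<Sum>i\<in>UNIV. \<Sum>j\<in>UNIV. \<bar>B $ i $ j\<bar>)"
    by (rule member_le_sum[where f="\<lambda>i. \<Sum>j\<in>UNIV. \<bar>B $ i $ j\<bar>"]) (auto intro: sum_nonneg)
  finally show "x \<le> (\<Sum>i\<in>UNIV. \<Sum>j\<in>UNIV. \<bar>B $ i $ j\<bar>)" using x by simp
qed

lemma eigval_le_spec:
  fixes B :: "real^'n^'n"
  assumes ev: "B *v v = c *\<^sub>R v" and v0: "v \<noteq> 0"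
  shows "\<bar>c\<bar> \<le> spec_radius B"
proof -
  define cv :: "complex^'n" where "cv = (\<chi> i. complex_of_real (v $ i))"
  have cv0: "cv \<noteq> 0" using v0 unfolding cv_def by (simp add: vec_eq_iff)
  have "(\<chi> i j. complex_of_real (B $ i $ j)) *v cv = complex_of_real c *s cv"
  proof -
    have "((\<chi> i j. complex_of_real (B $ i $ j)) *v cv) $ i = (complex_of_real c *s cv) $ i" for i
    proof -
      have "((\<chi> i j. complex_of_real (B $ i $ j)) *v cv) $ i = complex_of_real ((B *v v) $ i)"
        unfolding cv_def by (simp add: matrix_vector_mult_def)
      also have "\<dots> = complex_of_real (c * v $ i)" using ev by simp
      finally show ?thesis unfolding cv_def by simp
    qed
    then show ?thesis by (simp add: vec_eq_iff)
  qed
  then have "cmod (complex_of_real c) \<in> {cmod l | l. \<exists>v :: complex^'n. v \<noteq> 0 \<and> (\<chi> i j. complex_of_real (B $ i $ j)) *v v = l *s v}"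
    using cv0 by blast
  then show ?thesis unfolding spec_radius_def using eig_bdd[of B] by (simp add: cSup_upper)
qed


lemma key_bound:
  fixes xs :: "nat \<Rightarrow> real^'p" and e :: "nat \<Rightarrow> real"
  assumes inv: "invertible (\<Sum>i\<in>I. outer (xs i))"
  shows "spec_radius (matrix_inv (\<Sum>i\<in>I. outer (xs i))) > 0"
    and "(norm (matrix_inv (\<Sum>i\<in>I. outer (xs i)) *v (\<Sum>i\<in>I. e i *\<^sub>R xs i)))\<^sup>2
          \<le> spec_radius (matrix_inv (\<Sum>i\<in>I. outer (xs i))) * (\<Sum>i\<in>I. (e i)\<^sup>2)"
proof -
  define A where "A = (\<Sum>i\<in>I. outer (xs i))"
  define B where "B = matrix_inv A"
  define b where "b = (\<Sum>i\<in>I. e i *\<^sub>R xs i)"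
  define u where "u = B *v b"
  define E where "E = (\<Sum>i\<in>I. (e i)\<^sup>2)"
  have AB: "A ** B = mat 1" "B ** A = mat 1" using matrix_inv_props[OF inv] unfolding A_def B_def by auto
  have Au: "A *v u = b" unfolding u_def by (simp add: matrix_vector_mul_assoc AB)
  define Q where "Q = u \<bullet> (A *v u)"
  have Qsq: "Q = (\<Sum>i\<in>I. (xs i \<bullet> u)\<^sup>2)" unfolding Q_def A_def by (rule quad_nonneg)
  have Q0: "Q \<ge> 0" unfolding Qsq by (simp add: sum_nonneg)
  have E0: "E \<ge> 0" unfolding E_def by (simp add: sum_nonneg)
  have QE: "Q \<le> E"
  proof -
    have "Q = u \<bullet> b" unfolding Q_def Au ..
    also have "\<dots> = (\<Sum>i\<in>I. e i * (xs i \<bullet> u))" unfolding b_def by (simp add: inner_sum_right inner_commute)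
    also have "\<dots> \<le> (\<Sum>i\<in>I. \<bar>e i\<bar> * \<bar>xs i \<bullet> u\<bar>)" by (intro sum_mono) (simp add: abs_mult[symmetric])
    also have "\<dots> \<le> L2_set e I * L2_set (\<lambda>i. xs i \<bullet> u) I" by (rule L2_set_mult_ineq)
    also have "\<dots> = sqrt E * sqrt Q" unfolding L2_set_def E_def Qsq ..
    finally have "Q \<le> sqrt E * sqrt Q" .
    then have "Q\<^sup>2 \<le> (sqrt E * sqrt Q)\<^sup>2" using Q0 by (intro power_mono) auto
    also have "(sqrt E * sqrt Q)\<^sup>2 = E * Q" using Q0 E0 by (simp add: power_mult_distrib)
    finally have "Q * Q \<le> E * Q" by (simp add: power2_eq_square)
    then show ?thesis using Q0 E0 by (cases "Q = 0") (auto simp: mult_le_cancel_right)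
  qed
  have sym: "\<And>v w. w \<bullet> (A *v v) = v \<bullet> (A *v w)" unfolding A_def by (rule quad_sym)
  obtain v \<mu> where nv: "norm v = 1" and Av: "A *v v = \<mu> *\<^sub>R v" and low: "\<And>w. \<mu> * (norm w)\<^sup>2 \<le> w \<bullet> (A *v w)"
    using min_eig[OF sym] by blast
  have v0: "v \<noteq> 0" using nv by auto
  have mu0: "\<mu> \<ge> 0"
  proof -
    have "\<mu> = v \<bullet> (A *v v)" using nv by (simp add: Av power2_norm_eq_inner[symmetric])
    also have "\<dots> \<ge> 0" unfolding A_def quad_nonneg by (simp add: sum_nonneg)
    finally show ?thesis by simp
  qed
  have BAv: "B *v (A *v v) = v" by (simp add: matrix_vector_mul_assoc AB)
  have mun: "\<mu> \<noteq> 0"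
  proof
    assume "\<mu> = 0"
    then have "A *v v = 0" using Av by simp
    then show False using BAv v0 by simp
  qed
  have mup: "\<mu> > 0" using mu0 mun by simp
  have Bv: "B *v v = (1 / \<mu>) *\<^sub>R v"
  proof -
    have "v = \<mu> *\<^sub>R (B *v v)" using BAv unfolding Av by (simp add: matrix_vector_mult_scaleR)
    then have "(1/\<mu>) *\<^sub>R v = (1/\<mu>) *\<^sub>R (\<mu> *\<^sub>R (B *v v))" by simp
    also have "\<dots> = B *v v" using mun by simp
    finally have "(1/\<mu>) *\<^sub>R v = B *v v" .
    then show ?thesis by simp
  qed
  have rho: "1 / \<mu> \<le> spec_radius B" using eigval_le_spec[OF Bv v0] mup by simp
  then show "spec_radius (matrix_inv (\<Sum>i\<in>I. outer (xs i))) > 0"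
    unfolding B_def A_def using mup by (smt (verit) divide_pos_pos)
  have "\<mu> * (norm u)\<^sup>2 \<le> E" using low[of u] QE unfolding Q_def by simp
  then have "(norm u)\<^sup>2 \<le> E / \<mu>" using mup by (simp add: field_simps)
  also have "\<dots> = (1 / \<mu>) * E" by simp
  also have "\<dots> \<le> spec_radius B * E" using rho E0 by (intro mult_right_mono)
  finally show "(norm (matrix_inv (\<Sum>i\<in>I. outer (xs i)) *v (\<Sum>i\<in>I. e i *\<^sub>R xs i)))\<^sup>2
          \<le> spec_radius (matrix_inv (\<Sum>i\<in>I. outer (xs i))) * (\<Sum>i\<in>I. (e i)\<^sup>2)"
    unfolding u_def B_def A_def b_def E_def .
qed

lemma invertible_mono:
  fixes xs :: "nat \<Rightarrow> real^'p"
  assumes inv: "invertible (\<Sum>i\<in>{1..n0}. outer (xs i))" and n: "n0 \<le> n"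
  shows "invertible (\<Sum>i\<in>{1..n}. outer (xs i))"
proof -
  have ker: "\<forall>x. (\<Sum>i\<in>{1..n0}. outer (xs i)) *v x = 0 \<longrightarrow> x = 0"
    using inv matrix_left_invertible_ker invertible_left_inverse by blast
  have "\<forall>x. (\<Sum>i\<in>{1..n}. outer (xs i)) *v x = 0 \<longrightarrow> x = 0"
  proof (intro allI impI)
    fix x assume "(\<Sum>i\<in>{1..n}. outer (xs i)) *v x = 0"
    then have "x \<bullet> ((\<Sum>i\<in>{1..n}. outer (xs i)) *v x) = 0" by simp
    then have "(\<Sum>i\<in>{1..n}. (xs i \<bullet> x)\<^sup>2) = 0" unfolding quad_nonneg .
    then have z: "xs i \<bullet> x = 0" if "i \<in> {1..n}" for i
      using that by (subst (asm) sum_nonneg_eq_0_iff) auto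
    have "(\<Sum>i\<in>{1..n0}. outer (xs i)) *v x = (\<Sum>i\<in>{1..n0}. (xs i \<bullet> x) *\<^sub>R xs i)" by (rule outer_mult_sum)
    also have "\<dots> = 0" using z n by (intro sum.neutral) auto
    finally show "x = 0" using ker by blast
  qed
  then show ?thesis using matrix_left_invertible_ker invertible_left_inverse by blast
qed


lemma (in prob_space) cov_compl:
  assumes A: "A \<in> events" and B: "B \<in> events"
  shows "prob (A \<inter> B) - prob A * prob B = prob ((space M - A) \<inter> (space M - B)) - prob (space M - A) * prob (space M - B)"
proof -
  have e: "(space M - A) \<inter> (space M - B) = space M - (A \<union> B)" by auto
  have "prob (space M - (A \<union> B)) = 1 - prob (A \<union> B)" using A B by (intro prob_compl) auto
  moreover have "prob (A \<union> B) = prob A + prob B - prob (A \<inter> B)"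
    using A B by (intro measure_Un3) (auto simp: fmeasurable_eq_sets)
  ultimately have h1: "prob (space M - (A \<union> B)) = 1 - (prob A + prob B - prob (A \<inter> B))" by simp
  show ?thesis unfolding e h1 prob_compl[OF A] prob_compl[OF B] by (simp add: algebra_simps)
qed

lemma (in prob_space) D_plus:
  fixes \<epsilon> :: "nat \<Rightarrow> 'a \<Rightarrow> real"
  assumes [measurable]: "\<And>n. \<epsilon> n \<in> borel_measurable M" and pq: "pairwise_PQD M \<epsilon>"
    and k: "1 \<le> k" and j: "1 \<le> j" and kj: "k \<noteq> j" and x: "0 \<le> x" and y: "0 \<le> y"
  shows "prob {\<omega>\<in>space M. max (\<epsilon> k \<omega>) 0 > x \<and> max (\<epsilon> j \<omega>) 0 > y}
     - prob {\<omega>\<in>space M. max (\<epsilon> k \<omega>) 0 > x} * prob {\<omega>\<in>space M. max (\<epsilon> j \<omega>) 0 > y} \<ge> 0"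
proof -
  define A where "A = {\<omega>\<in>space M. \<epsilon> k \<omega> \<le> x}"
  define B where "B = {\<omega>\<in>space M. \<epsilon> j \<omega> \<le> y}"
  have [measurable]: "A \<in> events" "B \<in> events" unfolding A_def B_def by measurable
  have e1: "{\<omega>\<in>space M. max (\<epsilon> k \<omega>) 0 > x \<and> max (\<epsilon> j \<omega>) 0 > y} = (space M - A) \<inter> (space M - B)"
    unfolding A_def B_def using x y by auto
  have e2: "{\<omega>\<in>space M. max (\<epsilon> k \<omega>) 0 > x} = space M - A" unfolding A_def using x by auto
  have e3: "{\<omega>\<in>space M. max (\<epsilon> j \<omega>) 0 > y} = space M - B" unfolding B_def using y by auto
  have "prob (A \<inter> B) - prob A * prob B \<ge> 0"
  proof -
    have "A \<inter> B = {\<omega>\<in>space M. \<epsilon> k \<omega> \<le> x \<and> \<epsilon> j \<omega> \<le> y}" unfolding A_def B_def by auto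
    then show ?thesis using pq k j kj unfolding pairwise_PQD_def A_def B_def by auto
  qed
  moreover have "prob ((space M - A) \<inter> (space M - B)) - prob (space M - A) * prob (space M - B) = prob (A \<inter> B) - prob A * prob B"
    by (rule cov_compl[symmetric]) auto
  ultimately show ?thesis unfolding e1 e2 e3 by linarith
qed

lemma (in prob_space) D_minus:
  fixes \<epsilon> :: "nat \<Rightarrow> 'a \<Rightarrow> real"
  assumes [measurable]: "\<And>n. \<epsilon> n \<in> borel_measurable M" and pq: "pairwise_PQD M \<epsilon>"
    and k: "1 \<le> k" and j: "1 \<le> j" and kj: "k \<noteq> j" and x: "0 \<le> x" and y: "0 \<le> y"
  shows "prob {\<omega>\<in>space M. max (- \<epsilon> k \<omega>) 0 \<ge> x \<and> max (- \<epsilon> j \<omega>) 0 \<ge> y}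
     - prob {\<omega>\<in>space M. max (- \<epsilon> k \<omega>) 0 \<ge> x} * prob {\<omega>\<in>space M. max (- \<epsilon> j \<omega>) 0 \<ge> y} \<ge> 0"
proof (cases "x = 0 \<or> y = 0")
  case True
  then show ?thesis
  proof
    assume x0: "x = 0"
    have "{\<omega>\<in>space M. max (- \<epsilon> k \<omega>) 0 \<ge> x \<and> max (- \<epsilon> j \<omega>) 0 \<ge> y} = {\<omega>\<in>space M. max (- \<epsilon> j \<omega>) 0 \<ge> y}"
      "{\<omega>\<in>space M. max (- \<epsilon> k \<omega>) 0 \<ge> x} = space M" using x0 by auto
    then show ?thesis by (simp add: prob_space)
  next
    assume y0: "y = 0"
    have "{\<omega>\<in>space M. max (- \<epsilon> k \<omega>) 0 \<ge> x \<and> max (- \<epsilon> j \<omega>) 0 \<ge> y} = {\<omega>\<in>space M. max (- \<epsilon> k \<omega>) 0 \<ge> x}"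
      "{\<omega>\<in>space M. max (- \<epsilon> j \<omega>) 0 \<ge> y} = space M" using y0 by auto
    then show ?thesis by (simp add: prob_space)
  qed
next
  case False
  then have xp: "x > 0" and yp: "y > 0" using x y by auto
  have e1: "{\<omega>\<in>space M. max (- \<epsilon> k \<omega>) 0 \<ge> x \<and> max (- \<epsilon> j \<omega>) 0 \<ge> y} = {\<omega>\<in>space M. \<epsilon> k \<omega> \<le> -x \<and> \<epsilon> j \<omega> \<le> -y}"
    using xp yp by auto
  have e2: "{\<omega>\<in>space M. max (- \<epsilon> k \<omega>) 0 \<ge> x} = {\<omega>\<in>space M. \<epsilon> k \<omega> \<le> -x}" using xp by auto
  have e3: "{\<omega>\<in>space M. max (- \<epsilon> j \<omega>) 0 \<ge> y} = {\<omega>\<in>space M. \<epsilon> j \<omega> \<le> -y}" using yp by auto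
  show ?thesis unfolding e1 e2 e3 using pq k j kj unfolding pairwise_PQD_def by auto
qed


lemma final_det:
  fixes xs :: "nat \<Rightarrow> real^'p" and e :: "nat \<Rightarrow> real"
  assumes inv: "invertible (\<Sum>i\<in>{1..n0}. outer (xs i))"
    and lim: "(\<lambda>n. real n * spec_radius (matrix_inv (\<Sum>i\<in>{1..n}. outer (xs i)))) \<longlonglongrightarrow> 0"
    and bnd: "eventually (\<lambda>n. (\<Sum>i\<in>{1..n}. (e i)\<^sup>2) \<le> K * real n) sequentially"
  shows "(\<lambda>n. matrix_inv (\<Sum>i\<in>{1..n}. outer (xs i)) *v (\<Sum>i\<in>{1..n}. e i *\<^sub>R xs i)) \<longlonglongrightarrow> 0"
proof -
  define r where "r n = spec_radius (matrix_inv (\<Sum>i\<in>{1..n}. outer (xs i)))" for n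
  define u where "u n = matrix_inv (\<Sum>i\<in>{1..n}. outer (xs i)) *v (\<Sum>i\<in>{1..n}. e i *\<^sub>R xs i)" for n
  have ev: "eventually (\<lambda>n. (norm (u n))\<^sup>2 \<le> K * (real n * r n)) sequentially"
    using bnd eventually_ge_at_top[of n0]
  proof eventually_elim
    case (elim n)
    have invn: "invertible (\<Sum>i\<in>{1..n}. outer (xs i))" using invertible_mono[OF inv elim(2)] .
    have r0: "r n > 0" unfolding r_def by (rule key_bound(1)[OF invn])
    have "(norm (u n))\<^sup>2 \<le> r n * (\<Sum>i\<in>{1..n}. (e i)\<^sup>2)" unfolding u_def r_def by (rule key_bound(2)[OF invn])
    also have "\<dots> \<le> r n * (K * real n)" using elim(1) r0 by (intro mult_left_mono) auto
    finally show ?case by (simp add: algebra_simps)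
  qed
  have "(\<lambda>n. K * (real n * r n)) \<longlonglongrightarrow> K * 0" unfolding r_def by (intro tendsto_intros lim)
  then have "(\<lambda>n. (norm (u n))\<^sup>2) \<longlonglongrightarrow> 0"
    by (intro real_tendsto_sandwich[OF _ ev tendsto_const]) auto
  then have "(\<lambda>n. sqrt ((norm (u n))\<^sup>2)) \<longlonglongrightarrow> sqrt 0" by (intro tendsto_intros)
  then have "(\<lambda>n. norm (u n)) \<longlonglongrightarrow> 0" by simp
  then show ?thesis unfolding u_def by (simp add: tendsto_norm_zero_iff)
qed

theorem theorem5:
  fixes M :: "'a measure"
    and x :: "nat \<Rightarrow> 'a \<Rightarrow> real^'p"
    and \<epsilon> :: "nat \<Rightarrow> 'a \<Rightarrow> real"
    and Z :: "'a \<Rightarrow> real"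
    and \<beta> :: "real^'p"
  assumes "prob_space M"
    and "\<And>i. x i \<in> borel_measurable M"
    and "\<And>n. \<epsilon> n \<in> borel_measurable M"
    and "Z \<in> borel_measurable M"
    and "pairwise_PQD M \<epsilon>"
    and "stoch_dominated M \<epsilon> Z"
    and "integrable M (\<lambda>\<omega>. (Z \<omega>)\<^sup>2)"
    and "(\<Sum>j. \<Sum>k\<in>{1..<j}.
           \<integral>\<^sup>+ t. indicator {real j..} t *
             ennreal (1 / t\<^sup>2 *
               (G_cov M (\<lambda>\<omega>. max (\<epsilon> k \<omega>) 0) (\<lambda>\<omega>. max (\<epsilon> j \<omega>) 0) (sqrt t)
              + G_cov M (\<lambda>\<omega>. max (- \<epsilon> k \<omega>) 0) (\<lambda>\<omega>. max (- \<epsilon> j \<omega>) 0) (sqrt t)))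
           \<partial>lborel) < \<infinity>"
    and "\<exists>n0\<ge>CARD('p). AE \<omega> in M. invertible (XtX x n0 \<omega>)"
    and "AE \<omega> in M. (\<lambda>n. real n * spec_radius (matrix_inv (XtX x n \<omega>))) \<longlonglongrightarrow> 0"
  shows "AE \<omega> in M. (\<lambda>n. beta_hat \<beta> x \<epsilon> n \<omega>) \<longlonglongrightarrow> \<beta>"
proof -
  interpret P: prob_space M by fact
  note meas[measurable] = assms(3) assms(4)
  from assms(6) obtain C where C: "C > 0"
    and domC: "\<And>n t. n \<ge> 1 \<Longrightarrow> t > 0 \<Longrightarrow> P.prob {\<omega>\<in>space M. \<bar>\<epsilon> n \<omega>\<bar> > t} \<le> C * P.prob {\<omega>\<in>space M. \<bar>Z \<omega>\<bar> > t}"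
    unfolding stoch_dominated_def by blast
  define Wp where "Wp i \<omega> = max (\<epsilon> i \<omega>) 0" for i \<omega>
  define Wm where "Wm i \<omega> = max (- \<epsilon> i \<omega>) 0" for i \<omega>
  have wp: "wsetup M Wp Z C (\<lambda>u x. x < u)"
  proof (intro wsetup.intro wsetup_axioms.intro)
    show "prob_space M" by fact
    show "Wp i \<in> borel_measurable M" for i unfolding Wp_def by measurable
    show "Wp i \<omega> \<ge> 0" for i \<omega> unfolding Wp_def by simp
    show "Measurable.pred M (\<lambda>\<omega>. y < Wp i \<omega>)" for i y unfolding Wp_def by measurable
    show "P.prob {\<omega>\<in>space M. Wp i \<omega> > y} \<le> C * P.prob {\<omega>\<in>space M. \<bar>Z \<omega>\<bar> > y}" if "i \<ge> 1" "y > 0" for i y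
    proof -
      have "P.prob {\<omega>\<in>space M. Wp i \<omega> > y} \<le> P.prob {\<omega>\<in>space M. \<bar>\<epsilon> i \<omega>\<bar> > y}"
        using that unfolding Wp_def by (intro P.finite_measure_mono) auto
      then show ?thesis using domC[OF that] by linarith
    qed
    show "P.prob {\<omega>\<in>space M. y1 < Wp k \<omega> \<and> y2 < Wp j \<omega>} - P.prob {\<omega>\<in>space M. y1 < Wp k \<omega>} * P.prob {\<omega>\<in>space M. y2 < Wp j \<omega>} \<ge> 0"
      if "1 \<le> k" "1 \<le> j" "k \<noteq> j" "0 \<le> y1" "0 \<le> y2" for k j y1 y2
      unfolding Wp_def using P.D_plus[OF assms(3) assms(5) that] by simp
  qed (use C assms(4) assms(7) in auto)
  have wm: "wsetup M Wm Z C (\<lambda>u x. x \<le> u)"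
  proof (intro wsetup.intro wsetup_axioms.intro)
    show "prob_space M" by fact
    show "Wm i \<in> borel_measurable M" for i unfolding Wm_def by measurable
    show "Wm i \<omega> \<ge> 0" for i \<omega> unfolding Wm_def by simp
    show "Measurable.pred M (\<lambda>\<omega>. y \<le> Wm i \<omega>)" for i y unfolding Wm_def by measurable
    show "P.prob {\<omega>\<in>space M. Wm i \<omega> > y} \<le> C * P.prob {\<omega>\<in>space M. \<bar>Z \<omega>\<bar> > y}" if "i \<ge> 1" "y > 0" for i y
    proof -
      have "P.prob {\<omega>\<in>space M. Wm i \<omega> > y} \<le> P.prob {\<omega>\<in>space M. \<bar>\<epsilon> i \<omega>\<bar> > y}"
        using that unfolding Wm_def by (intro P.finite_measure_mono) auto
      then show ?thesis using domC[OF that] by linarith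
    qed
    show "P.prob {\<omega>\<in>space M. y1 \<le> Wm k \<omega> \<and> y2 \<le> Wm j \<omega>} - P.prob {\<omega>\<in>space M. y1 \<le> Wm k \<omega>} * P.prob {\<omega>\<in>space M. y2 \<le> Wm j \<omega>} \<ge> 0"
      if "1 \<le> k" "1 \<le> j" "k \<noteq> j" "0 \<le> y1" "0 \<le> y2" for k j y1 y2
      unfolding Wm_def using P.D_minus[OF assms(3) assms(5) that] by simp
  qed (use C assms(4) assms(7) in auto)
  have Gp0: "G_cov M (Wp k) (Wp j) s \<ge> 0" if "1 \<le> k" "1 \<le> j" "k \<noteq> j" "s > 0" for k j s
    using wsetup.G_nonneg[OF wp that] .
  have Gm0: "G_cov M (Wm k) (Wm j) s \<ge> 0" if "1 \<le> k" "1 \<le> j" "k \<noteq> j" "s > 0" for k j s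
    using wsetup.G_nonneg[OF wm that] .
  have Wp_eq: "(\<lambda>\<omega>. max (\<epsilon> k \<omega>) 0) = Wp k" for k unfolding Wp_def ..
  have Wm_eq: "(\<lambda>\<omega>. max (- \<epsilon> k \<omega>) 0) = Wm k" for k unfolding Wm_def ..
  define T where "T j k = (\<integral>\<^sup>+ t. indicator {real j..} t * ennreal (1 / t\<^sup>2 * (G_cov M (Wp k) (Wp j) (sqrt t) + G_cov M (Wm k) (Wm j) (sqrt t))) \<partial>lborel)" for j k
  have HT: "(\<Sum>j. \<Sum>k\<in>{1..<j}. T j k) < \<infinity>" using assms(8) unfolding T_def Wp_eq Wm_eq .
  have Hp: "(\<Sum>j. \<Sum>k\<in>{1..<j}. \<integral>\<^sup>+ t. indicator {real j..} t * wsetup.hk M Wp k j t \<partial>lborel) < \<infinity>"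
  proof (rule le_less_trans[OF _ HT])
    show "(\<Sum>j. \<Sum>k\<in>{1..<j}. \<integral>\<^sup>+ t. indicator {real j..} t * wsetup.hk M Wp k j t \<partial>lborel) \<le> (\<Sum>j. \<Sum>k\<in>{1..<j}. T j k)"
    proof (intro suminf_le summableI sum_mono)
      fix j k :: nat assume k: "k \<in> {1..<j}"
      show "(\<integral>\<^sup>+ t. indicator {real j..} t * wsetup.hk M Wp k j t \<partial>lborel) \<le> T j k"
        unfolding T_def wsetup.hk_def[OF wp]
      proof (intro nn_integral_mono)
        fix t
        show "indicator {real j..} t * ennreal (1 / t\<^sup>2 * G_cov M (Wp k) (Wp j) (sqrt t))
          \<le> indicator {real j..} t * ennreal (1 / t\<^sup>2 * (G_cov M (Wp k) (Wp j) (sqrt t) + G_cov M (Wm k) (Wm j) (sqrt t)))"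
        proof (cases "t \<in> {real j..}")
          case True
          then have "t > 0" using k by auto
          then have "G_cov M (Wm k) (Wm j) (sqrt t) \<ge> 0" using k by (intro Gm0) auto
          then have "1 / t\<^sup>2 * G_cov M (Wp k) (Wp j) (sqrt t) \<le> 1 / t\<^sup>2 * (G_cov M (Wp k) (Wp j) (sqrt t) + G_cov M (Wm k) (Wm j) (sqrt t))"
            by (intro mult_left_mono) auto
          then show ?thesis using True by (simp add: ennreal_leI)
        qed simp
      qed
    qed
  qed
  have Hm: "(\<Sum>j. \<Sum>k\<in>{1..<j}. \<integral>\<^sup>+ t. indicator {real j..} t * wsetup.hk M Wm k j t \<partial>lborel) < \<infinity>"
  proof (rule le_less_trans[OF _ HT])
    show "(\<Sum>j. \<Sum>k\<in>{1..<j}. \<integral>\<^sup>+ t. indicator {real j..} t * wsetup.hk M Wm k j t \<partial>lborel) \<le> (\<Sum>j. \<Sum>k\<in>{1..<j}. T j k)"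
    proof (intro suminf_le summableI sum_mono)
      fix j k :: nat assume k: "k \<in> {1..<j}"
      show "(\<integral>\<^sup>+ t. indicator {real j..} t * wsetup.hk M Wm k j t \<partial>lborel) \<le> T j k"
        unfolding T_def wsetup.hk_def[OF wm]
      proof (intro nn_integral_mono)
        fix t
        show "indicator {real j..} t * ennreal (1 / t\<^sup>2 * G_cov M (Wm k) (Wm j) (sqrt t))
          \<le> indicator {real j..} t * ennreal (1 / t\<^sup>2 * (G_cov M (Wp k) (Wp j) (sqrt t) + G_cov M (Wm k) (Wm j) (sqrt t)))"
        proof (cases "t \<in> {real j..}")
          case True
          then have "t > 0" using k by auto
          then have "G_cov M (Wp k) (Wp j) (sqrt t) \<ge> 0" using k by (intro Gp0) auto
          then have "1 / t\<^sup>2 * G_cov M (Wm k) (Wm j) (sqrt t) \<le> 1 / t\<^sup>2 * (G_cov M (Wp k) (Wp j) (sqrt t) + G_cov M (Wm k) (Wm j) (sqrt t))"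
            by (intro mult_left_mono) auto
          then show ?thesis using True by (simp add: ennreal_leI)
        qed simp
      qed
    qed
  qed
  have AEp: "AE \<omega> in M. \<exists>K. eventually (\<lambda>n. (\<Sum>i\<in>{1..n}. (Wp i \<omega>)\<^sup>2) \<le> K * real n) sequentially"
    by (rule wsetup.eventually_bounded[OF wp Hp])
  have AEm: "AE \<omega> in M. \<exists>K. eventually (\<lambda>n. (\<Sum>i\<in>{1..n}. (Wm i \<omega>)\<^sup>2) \<le> K * real n) sequentially"
    by (rule wsetup.eventually_bounded[OF wm Hm])
  from assms(9) obtain n0 where AEi: "AE \<omega> in M. invertible (XtX x n0 \<omega>)" by blast
  have XtX_eq: "XtX x n \<omega> = (\<Sum>i\<in>{1..n}. outer (x i \<omega>))" for n \<omega> unfolding XtX_def outer_def ..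
  show ?thesis
    using AEp AEm AEi assms(10)
  proof eventually_elim
    case (elim \<omega>)
    from elim(1) obtain Kp where Kp: "eventually (\<lambda>n. (\<Sum>i\<in>{1..n}. (Wp i \<omega>)\<^sup>2) \<le> Kp * real n) sequentially" by blast
    from elim(2) obtain Km where Km: "eventually (\<lambda>n. (\<Sum>i\<in>{1..n}. (Wm i \<omega>)\<^sup>2) \<le> Km * real n) sequentially" by blast
    have sq: "(\<epsilon> i \<omega>)\<^sup>2 = (Wp i \<omega>)\<^sup>2 + (Wm i \<omega>)\<^sup>2" for i unfolding Wp_def Wm_def by (simp add: max_def power2_eq_square)
    have bnd: "eventually (\<lambda>n. (\<Sum>i\<in>{1..n}. (\<epsilon> i \<omega>)\<^sup>2) \<le> (Kp + Km) * real n) sequentially"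
      using Kp Km by eventually_elim (simp add: sq sum.distrib algebra_simps)
    have "(\<lambda>n. matrix_inv (\<Sum>i\<in>{1..n}. outer (x i \<omega>)) *v (\<Sum>i\<in>{1..n}. \<epsilon> i \<omega> *\<^sub>R x i \<omega>)) \<longlonglongrightarrow> 0"
      by (rule final_det[OF elim(3)[unfolded XtX_eq] elim(4)[unfolded XtX_eq] bnd])
    then have "(\<lambda>n. \<beta> + matrix_inv (\<Sum>i\<in>{1..n}. outer (x i \<omega>)) *v (\<Sum>i\<in>{1..n}. \<epsilon> i \<omega> *\<^sub>R x i \<omega>)) \<longlonglongrightarrow> \<beta> + 0"
      by (intro tendsto_intros)
    then show ?case unfolding beta_hat_def XtX_eq Xteps_def by simp
  qed
qed


end
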